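(* Let $n\ge 3$, $q=\frac{2n}{n-2}$, $\kappa=\frac{n-1}{n}$. Identify $S^1$ with $[-\pi,\pi]$ with endpoints identified, and let $\lambda=-1$ on $(-\pi,0)$, $\lambda=1$ on $(0,\pi)$. For $t\in\mathbb{R}$ let $\tau_t=t+\lambda$. Let $N$ be a smooth positive function on $S^1$, let $\gamma_N=-\frac{\int_{S^1}\lambda N}{\int_{S^1}N}$, and let $\eta,\mu\in\mathbb{R}$. Consider the system $$-2\kappa q\,\phi''-2\eta^2\phi^{-q-1}-\kappa\Big(\mu+\tfrac{1}{2N}w'\Big)^2\phi^{-q-1}+\kappa\tau_t^2\phi^{q-1}=0,\qquad \Big(\tfrac{1}{2N}w'\Big)'-\phi^q\tau_t'=0$$ on $S^1$. Suppose $t=\gamma_N$. If $\mu=\eta=0$, there exists a one-parameter family of solutions. If $\mu=0$ and $\eta\neq0$, there does not exist a solution.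
   Context: Here $\tau_t'=2(\delta_0-\delta_\pi)$ is the distributional derivative ($\delta_x$ the Dirac mass at $x$), and the second equation is understood in the sense of distributions. A solution is a pair $(\phi,w)\in W^{2,p}_+(S^1)\times W^{1,p}(S^1)$ for some $p>1$, where the subscript $+$ denotes positive functions. Solutions differing only by adding a constant to $w$ are regarded as the same. *)

theory Defs
  imports "HOL-Analysis.Analysis"
begin

text \<open>S^1 = [-pi,pi] with endpoints identified: functions on S^1 are 2pi-periodic
  functions on the real line.\<close>
definition per2pi :: "(real \<Rightarrow> real) \<Rightarrow> bool" where
  "per2pi f \<longleftrightarrow> (\<forall>x. f (x + 2 * pi) = f x)"

definition smooth_fun :: "(real \<Rightarrow> real) \<Rightarrow> bool" where
  "smooth_fun f \<longleftrightarrow> (\<forall>k x. ((deriv ^^ k) f) differentiable (at x))"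

definition Lp_S1 :: "real \<Rightarrow> (real \<Rightarrow> real) \<Rightarrow> bool" where
  "Lp_S1 p g \<longleftrightarrow> g measurable_on {-pi..pi} \<and> (\<lambda>x. \<bar>g x\<bar> powr p) integrable_on {-pi..pi}"

text \<open>g is a (weak) derivative of f: f is the indefinite integral of g
  (the one-dimensional characterisation of W^{1,p}).\<close>
definition is_weak_deriv :: "(real \<Rightarrow> real) \<Rightarrow> (real \<Rightarrow> real) \<Rightarrow> bool" where
  "is_weak_deriv f g \<longleftrightarrow> (\<forall>a b. a \<le> b \<longrightarrow> (g has_integral (f b - f a)) {a..b})"

definition W1p_S1 :: "real \<Rightarrow> (real \<Rightarrow> real) \<Rightarrow> (real \<Rightarrow> real) \<Rightarrow> bool" where
  "W1p_S1 p w w' \<longleftrightarrow> per2pi w \<and> per2pi w' \<and> Lp_S1 p w \<and> Lp_S1 p w' \<and> is_weak_deriv w w'"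

definition W2p_pos_S1 :: "real \<Rightarrow> (real \<Rightarrow> real) \<Rightarrow> (real \<Rightarrow> real) \<Rightarrow> (real \<Rightarrow> real) \<Rightarrow> bool" where
  "W2p_pos_S1 p \<phi> \<phi>' \<phi>'' \<longleftrightarrow> (\<forall>x. \<phi> x > 0) \<and> W1p_S1 p \<phi> \<phi>' \<and> W1p_S1 p \<phi>' \<phi>''"

text \<open>lambda = -1 on (-pi,0), 1 on (0,pi), extended periodically (value at 0, pi irrelevant).\<close>
definition lam :: "real \<Rightarrow> real" where
  "lam x = (if sin x > 0 then 1 else if sin x < 0 then -1 else 0)"

definition tau :: "real \<Rightarrow> real \<Rightarrow> real" where
  "tau t x = t + lam x"

definition gammaN :: "(real \<Rightarrow> real) \<Rightarrow> real" where
  "gammaN N = - (integral {-pi..pi} (\<lambda>x. lam x * N x)) / integral {-pi..pi} N"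

definition qexp :: "nat \<Rightarrow> real" where
  "qexp n = 2 * real n / (real n - 2)"

definition kap :: "nat \<Rightarrow> real" where
  "kap n = (real n - 1) / real n"

text \<open>(phi,w) is a solution: phi in W^{2,p}_+, w in W^{1,p} for some p > 1; the first equation
  holds almost everywhere, the second in the sense of distributions on S^1, where
  phi^q tau_t' = 2 (phi(0)^q delta_0 - phi(pi)^q delta_pi) as phi is continuous.\<close>
definition is_solution ::
  "nat \<Rightarrow> (real \<Rightarrow> real) \<Rightarrow> real \<Rightarrow> real \<Rightarrow> real \<Rightarrow> (real \<Rightarrow> real) \<Rightarrow> (real \<Rightarrow> real) \<Rightarrow> bool" where
  "is_solution n N t \<eta> \<mu> \<phi> w \<longleftrightarrow>
    (\<exists>p > 1. \<exists>\<phi>' \<phi>'' w'.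
       W2p_pos_S1 p \<phi> \<phi>' \<phi>'' \<and> W1p_S1 p w w' \<and>
       (AE x in lborel.
          - 2 * kap n * qexp n * \<phi>'' x
          - 2 * \<eta>\<^sup>2 * \<phi> x powr (- qexp n - 1)
          - kap n * (\<mu> + w' x / (2 * N x))\<^sup>2 * \<phi> x powr (- qexp n - 1)
          + kap n * (tau t x)\<^sup>2 * \<phi> x powr (qexp n - 1) = 0) \<and>
       (\<forall>\<psi>. smooth_fun \<psi> \<and> per2pi \<psi> \<longrightarrow>
          - integral {-pi..pi} (\<lambda>x. w' x / (2 * N x) * deriv \<psi> x)
            = 2 * (\<phi> 0 powr qexp n * \<psi> 0 - \<phi> pi powr qexp n * \<psi> pi)))"

text \<open>Solutions differing by a constant added to w are identified.\<close>
definition same_solution :: "((real \<Rightarrow> real) \<times> (real \<Rightarrow> real)) \<Rightarrow> ((real \<Rightarrow> real) \<times> (real \<Rightarrow> real)) \<Rightarrow> bool" where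
  "same_solution s1 s2 \<longleftrightarrow> fst s1 = fst s2 \<and> (\<exists>c. \<forall>x. snd s1 x = snd s2 x + c)"

end

theory Submission
  imports Defs
begin


definition trig :: "(real \<Rightarrow> real) set" where
  "trig = {f. \<exists>n a b. \<forall>x. f x = (\<Sum>k\<le>n. a k * cos (real k * x) + b k * sin (real k * x))}"

lemma trigI: "(\<And>x. f x = (\<Sum>k\<le>n. a k * cos (real k * x) + b k * sin (real k * x))) \<Longrightarrow> f \<in> trig"
  unfolding trig_def by blast

lemma sum_if_le:
  fixes m n :: nat
  assumes "m \<le> n"
  shows "(\<Sum>k\<le>n. if k \<le> m then T k else (0::real)) = (\<Sum>k\<le>m. T k)"
proof -
  have "(\<Sum>k\<le>n. if k \<le> m then T k else (0::real)) = (\<Sum>k\<in>{..n} \<inter> {k. k \<le> m}. T k)"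
    by (subst sum.inter_restrict) auto
  also have "{..n} \<inter> {k. k \<le> m} = {..m}" using assms by auto
  finally show ?thesis .
qed

lemma trig_add: "f \<in> trig \<Longrightarrow> g \<in> trig \<Longrightarrow> (\<lambda>x. f x + g x) \<in> trig"
proof -
  assume "f \<in> trig" "g \<in> trig"
  then obtain n1 a1 b1 n2 a2 b2 where f: "\<And>x. f x = (\<Sum>k\<le>n1. a1 k * cos (real k * x) + b1 k * sin (real k * x))"
    and g: "\<And>x. g x = (\<Sum>k\<le>n2. a2 k * cos (real k * x) + b2 k * sin (real k * x))"
    unfolding trig_def by blast
  define a where "a k = (if k \<le> n1 then a1 k else 0) + (if k \<le> n2 then a2 k else 0)" for k
  define b where "b k = (if k \<le> n1 then b1 k else 0) + (if k \<le> n2 then b2 k else 0)" for k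
  have "f x + g x = (\<Sum>k\<le>n1+n2. a k * cos (real k * x) + b k * sin (real k * x))" for x
  proof -
    have "(\<Sum>k\<le>n1+n2. a k * cos (real k * x) + b k * sin (real k * x))
       = (\<Sum>k\<le>n1+n2. (if k \<le> n1 then a1 k * cos (real k * x) + b1 k * sin (real k * x) else 0))
       + (\<Sum>k\<le>n1+n2. (if k \<le> n2 then a2 k * cos (real k * x) + b2 k * sin (real k * x) else 0))"
      unfolding a_def b_def sum.distrib[symmetric] by (rule sum.cong) (auto simp: algebra_simps)
    also have "\<dots> = f x + g x" unfolding f g by (subst sum_if_le, simp)+ simp
    finally show ?thesis by simp
  qed
  then show ?thesis by (rule trigI)
qed

lemma trig_scale: "f \<in> trig \<Longrightarrow> (\<lambda>x. c * f x) \<in> trig"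
proof -
  assume "f \<in> trig"
  then obtain n a b where f: "\<And>x. f x = (\<Sum>k\<le>n. a k * cos (real k * x) + b k * sin (real k * x))"
    unfolding trig_def by blast
  have "c * f x = (\<Sum>k\<le>n. (c * a k) * cos (real k * x) + (c * b k) * sin (real k * x))" for x
    unfolding f sum_distrib_left by (simp add: algebra_simps)
  then show ?thesis by (rule trigI)
qed

lemma trig_cos_mode: "(\<lambda>x. cos (real m * x)) \<in> trig"
proof -
  have "cos (real m * x) = (\<Sum>k\<le>m. (if k = m then 1 else 0) * cos (real k * x) + 0 * sin (real k * x))" for x
  proof -
    have "(\<Sum>k\<le>m. (if k = m then 1 else 0) * cos (real k * x) + 0 * sin (real k * x)) = (\<Sum>k\<le>m. if k = m then cos (real k * x) else 0)"
      by (rule sum.cong) auto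
    then show ?thesis by simp
  qed
  then show ?thesis by (rule trigI)
qed

lemma trig_sin_mode: "(\<lambda>x. sin (real m * x)) \<in> trig"
proof -
  have "sin (real m * x) = (\<Sum>k\<le>m. 0 * cos (real k * x) + (if k = m then 1 else 0) * sin (real k * x))" for x
  proof -
    have "(\<Sum>k\<le>m. 0 * cos (real k * x) + (if k = m then 1 else 0) * sin (real k * x)) = (\<Sum>k\<le>m. if k = m then sin (real k * x) else 0)"
      by (rule sum.cong) auto
    then show ?thesis by simp
  qed
  then show ?thesis by (rule trigI)
qed

lemma trig_const: "(\<lambda>x. c) \<in> trig"
  using trig_scale[OF trig_cos_mode[of 0], of c] by simp

lemma trig_sum: "finite I \<Longrightarrow> (\<And>i. i \<in> I \<Longrightarrow> f i \<in> trig) \<Longrightarrow> (\<lambda>x. \<Sum>i\<in>I. f i x) \<in> trig"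
proof (induction I rule: finite_induct)
  case empty then show ?case using trig_const[of 0] by simp
next
  case (insert i I) then show ?case using trig_add[of "f i" "\<lambda>x. \<Sum>i\<in>I. f i x"] by simp
qed

lemma cos_absdiff: "cos (real j * x - real k * x) = cos (real (if k \<le> j then j - k else k - j) * x)"
proof -
  have "real j * x - real k * x = (real j - real k) * x" by (simp add: algebra_simps)
  moreover have "cos ((real j - real k) * x) = cos ((real k - real j) * x)"
    by (metis cos_minus minus_diff_eq mult_minus_left)
  ultimately show ?thesis by (cases "k \<le> j") (auto simp: of_nat_diff)
qed

lemma sin_absdiff: "sin (real j * x - real k * x) = (if k \<le> j then 1 else -1) * sin (real (if k \<le> j then j - k else k - j) * x)"
proof -
  have "real j * x - real k * x = (real j - real k) * x" by (simp add: algebra_simps)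
  moreover have "sin ((real j - real k) * x) = - sin ((real k - real j) * x)"
    by (metis sin_minus minus_diff_eq mult_minus_left)
  ultimately show ?thesis by (cases "k \<le> j") (auto simp: of_nat_diff)
qed

lemma trig_cc: "(\<lambda>x. cos (real j * x) * cos (real k * x)) \<in> trig"
proof -
  have e: "cos (real j * x) * cos (real k * x) = (1/2) * cos (real (if k \<le> j then j - k else k - j) * x) + (1/2) * cos (real (j+k) * x)" for x
  proof -
    have "real j*x + real k*x = real (j+k)*x" by (simp add: algebra_simps)
    then show ?thesis using cos_times_cos[of "real j*x" "real k*x"] cos_absdiff[of j x k] by simp
  qed
  show ?thesis unfolding e by (intro trig_add trig_scale trig_cos_mode)
qed

lemma trig_ss: "(\<lambda>x. sin (real j * x) * sin (real k * x)) \<in> trig"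
proof -
  have e: "sin (real j * x) * sin (real k * x) = (1/2) * cos (real (if k \<le> j then j - k else k - j) * x) + (-1/2) * cos (real (j+k) * x)" for x
  proof -
    have "real j*x + real k*x = real (j+k)*x" by (simp add: algebra_simps)
    then show ?thesis using sin_times_sin[of "real j*x" "real k*x"] cos_absdiff[of j x k] by simp
  qed
  show ?thesis unfolding e by (intro trig_add trig_scale trig_cos_mode)
qed

lemma trig_sc: "(\<lambda>x. sin (real j * x) * cos (real k * x)) \<in> trig"
proof -
  have e: "sin (real j * x) * cos (real k * x) = (1/2) * sin (real (j+k) * x) + ((if k \<le> j then 1 else -1)/2) * sin (real (if k \<le> j then j - k else k - j) * x)" for x
  proof -
    have "real j*x + real k*x = real (j+k)*x" by (simp add: algebra_simps)
    then show ?thesis using sin_times_cos[of "real j*x" "real k*x"] sin_absdiff[of j x k] by simp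
  qed
  show ?thesis unfolding e by (intro trig_add trig_scale trig_sin_mode)
qed

lemma trig_cs: "(\<lambda>x. cos (real j * x) * sin (real k * x)) \<in> trig"
  using trig_sc[of k j] by (simp add: mult.commute)

lemma trig_mult: "f \<in> trig \<Longrightarrow> g \<in> trig \<Longrightarrow> (\<lambda>x. f x * g x) \<in> trig"
proof -
  assume "f \<in> trig" "g \<in> trig"
  then obtain n1 a1 b1 n2 a2 b2 where f: "\<And>x. f x = (\<Sum>k\<le>n1. a1 k * cos (real k * x) + b1 k * sin (real k * x))"
    and g: "\<And>x. g x = (\<Sum>k\<le>n2. a2 k * cos (real k * x) + b2 k * sin (real k * x))"
    unfolding trig_def by blast
  have e: "f x * g x = (\<Sum>j\<le>n1. \<Sum>k\<le>n2. (a1 j * a2 k) * (cos (real j * x) * cos (real k * x))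
     + (a1 j * b2 k) * (cos (real j * x) * sin (real k * x)) + (b1 j * a2 k) * (sin (real j * x) * cos (real k * x))
     + (b1 j * b2 k) * (sin (real j * x) * sin (real k * x)))" for x
  proof -
    have h: "(A*x1 + B*y1)*(C*x2 + D*y2) = (A*C)*(x1*x2) + (A*D)*(x1*y2) + (B*C)*(y1*x2) + (B*D)*(y1*y2)"
      for A B C D x1 y1 x2 y2 :: real by (simp add: algebra_simps)
    show ?thesis unfolding f g sum_product h ..
  qed
  show ?thesis unfolding e
    apply (rule trig_sum, simp)+
    apply (rule trig_add)+
       apply (rule trig_scale, rule trig_cc)
      apply (rule trig_scale, rule trig_cs)
     apply (rule trig_scale, rule trig_sc)
    apply (rule trig_scale, rule trig_ss)
    done
qed

lemma trig_deriv: "f \<in> trig \<Longrightarrow> \<exists>f'\<in>trig. \<forall>x. (f has_real_derivative f' x) (at x)"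
proof -
  assume "f \<in> trig"
  then obtain n a b where f: "\<And>x. f x = (\<Sum>k\<le>n. a k * cos (real k * x) + b k * sin (real k * x))"
    unfolding trig_def by blast
  define f' where "f' x = (\<Sum>k\<le>n. (b k * real k) * cos (real k * x) + (- a k * real k) * sin (real k * x))" for x
  have "f' \<in> trig" unfolding f'_def by (rule trigI) (rule refl)
  moreover have "(f has_real_derivative f' x) (at x)" for x
  proof -
    have "((\<lambda>x. \<Sum>k\<le>n. a k * cos (real k * x) + b k * sin (real k * x)) has_real_derivative f' x) (at x)"
      unfolding f'_def
    proof (rule DERIV_sum)
      fix k show "((\<lambda>x. a k * cos (real k * x) + b k * sin (real k * x)) has_real_derivative (b k * real k * cos (real k * x) + - a k * real k * sin (real k * x))) (at x)"
        by (rule derivative_eq_intros refl | simp)+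
    qed
    moreover have "f = (\<lambda>x. \<Sum>k\<le>n. a k * cos (real k * x) + b k * sin (real k * x))"
      by (rule ext) (rule f)
    ultimately show ?thesis by simp
  qed
  ultimately show ?thesis by blast
qed

lemma trig_deriv_in: "f \<in> trig \<Longrightarrow> deriv f \<in> trig \<and> (\<forall>x. (f has_real_derivative deriv f x) (at x))"
proof -
  assume "f \<in> trig"
  then obtain f' where f': "f' \<in> trig" "\<And>x. (f has_real_derivative f' x) (at x)" using trig_deriv by blast
  then have "deriv f = f'" by (intro ext DERIV_imp_deriv) 
  then show ?thesis using f' by simp
qed

lemma trig_funpow: "f \<in> trig \<Longrightarrow> (deriv ^^ k) f \<in> trig"
  by (induction k) (auto dest: trig_deriv_in)

lemma trig_smooth: "f \<in> trig \<Longrightarrow> smooth_fun f"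
  unfolding smooth_fun_def
proof (intro allI)
  fix k x assume "f \<in> trig"
  then have "(deriv ^^ k) f \<in> trig" by (rule trig_funpow)
  then show "(deriv ^^ k) f differentiable (at x)"
    using trig_deriv_in real_differentiable_def by blast
qed

lemma cos_nat_per: "cos (real k * (x + 2 * pi)) = cos (real k * x)"
proof -
  have "real k * (x + 2 * pi) = real k * x + 2 * real k * pi" by (simp add: algebra_simps)
  then show ?thesis by (simp add: cos_add)
qed

lemma sin_nat_per: "sin (real k * (x + 2 * pi)) = sin (real k * x)"
proof -
  have "real k * (x + 2 * pi) = real k * x + 2 * real k * pi" by (simp add: algebra_simps)
  then show ?thesis by (simp add: sin_add)
qed

lemma trig_per: "f \<in> trig \<Longrightarrow> per2pi f"
  unfolding trig_def per2pi_def by (auto simp: cos_nat_per sin_nat_per)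

lemma trig_cont: "f \<in> trig \<Longrightarrow> continuous_on S f"
  by (meson DERIV_isCont continuous_at_imp_continuous_on trig_deriv_in)

lemma trig_antider: "f \<in> trig \<Longrightarrow> \<exists>c \<psi>. \<psi> \<in> trig \<and> (\<forall>x. (\<psi> has_real_derivative (f x - c)) (at x))"
proof -
  assume "f \<in> trig"
  then obtain n a b where f: "\<And>x. f x = (\<Sum>k\<le>n. a k * cos (real k * x) + b k * sin (real k * x))"
    unfolding trig_def by blast
  define a' where "a' k = (if k = 0 then 0 else - b k / real k)" for k
  define b' where "b' k = (if k = 0 then 0 else a k / real k)" for k
  define \<psi> where "\<psi> x = (\<Sum>k\<le>n. a' k * cos (real k * x) + b' k * sin (real k * x))" for x
  have "\<psi> \<in> trig" unfolding \<psi>_def by (rule trigI) (rule refl)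
  moreover have "(\<psi> has_real_derivative (f x - a 0)) (at x)" for x
  proof -
    have d: "((\<lambda>x. a' k * cos (real k * x) + b' k * sin (real k * x)) has_real_derivative
       (if k = 0 then 0 else a k * cos (real k * x) + b k * sin (real k * x))) (at x)" for k
    proof (cases "k = 0")
      case True then show ?thesis unfolding a'_def b'_def by simp
    next
      case False
      have "((\<lambda>x. a' k * cos (real k * x) + b' k * sin (real k * x)) has_real_derivative
         (b' k * real k * cos (real k * x) + - a' k * real k * sin (real k * x))) (at x)"
        by (rule derivative_eq_intros refl | simp)+
      moreover have "b' k * real k * cos (real k * x) + - a' k * real k * sin (real k * x)
          = a k * cos (real k * x) + b k * sin (real k * x)"
        using False unfolding a'_def b'_def by simp
      ultimately show ?thesis using False by simp
    qed
    have "((\<lambda>x. \<Sum>k\<le>n. a' k * cos (real k * x) + b' k * sin (real k * x)) has_real_derivative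
       (\<Sum>k\<le>n. if k = 0 then 0 else a k * cos (real k * x) + b k * sin (real k * x))) (at x)"
      by (rule DERIV_sum) (rule d)
    moreover have "(\<Sum>k\<le>n. a k * cos (real k * x) + b k * sin (real k * x))
       = (\<Sum>k\<le>n. (if k = 0 then a k * cos (real k * x) + b k * sin (real k * x) else 0))
       + (\<Sum>k\<le>n. if k = 0 then 0 else a k * cos (real k * x) + b k * sin (real k * x))"
      by (subst sum.distrib[symmetric]) (rule sum.cong, auto)
    moreover have "(\<Sum>k\<le>n. (if k = 0 then a k * cos (real k * x) + b k * sin (real k * x) else 0)) = a 0"
      by (subst sum.delta) auto
    ultimately show ?thesis unfolding \<psi>_def f by simp
  qed
  ultimately show ?thesis by blast
qed

lemma rpf_trig: "real_polynomial_function g \<Longrightarrow> (\<lambda>x. g (cis x)) \<in> trig"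
proof (induction g rule: real_polynomial_function.induct)
  case (linear f)
  have c: "cis x = cos x *\<^sub>R 1 + sin x *\<^sub>R \<i>" for x by (simp add: complex_eq_iff)
  have "f (cis x) = f 1 * cos (real 1 * x) + f \<i> * sin (real 1 * x)" for x
    unfolding c using linear by (simp add: linear_add linear_scale bounded_linear.linear)
  then show ?case using trig_add[OF trig_scale[OF trig_cos_mode[of 1]] trig_scale[OF trig_sin_mode[of 1]], of "f 1" "f \<i>"]
    by simp
next
  case (const c) then show ?case by (rule trig_const)
next
  case (add f g) from add.IH show ?case by (rule trig_add)
next
  case (mult f g) from mult.IH show ?case by (rule trig_mult)
qed



lemma circle_cont:
  assumes hc: "continuous_on {-pi..pi} h" and hp: "h (-pi) = h pi"
  shows "continuous_on (sphere 0 1) (\<lambda>z. h (Arg z))"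
proof -
  have hw: "continuous (at y within T) h" if "y \<in> {-pi..pi}" "T \<subseteq> {-pi..pi}" for y T
    using hc that continuous_on_eq_continuous_within continuous_within_subset by blast
  have Argr: "Arg z \<in> {-pi..pi}" for z using Arg_bounded[of z] by auto
  define h2 where "h2 y = (if y \<le> 0 then h (y + pi) else h (y - pi))" for y
  have h2c: "continuous_on {-pi..pi} h2"
    unfolding h2_def
  proof (rule continuous_on_cases_le)
    show "continuous_on {t \<in> {- pi..pi}. t \<le> 0} (\<lambda>t. h (t + pi))"
      by (rule continuous_on_compose2[OF hc]) (auto intro!: continuous_intros)
    show "continuous_on {t \<in> {- pi..pi}. 0 \<le> t} (\<lambda>t. h (t - pi))"
      by (rule continuous_on_compose2[OF hc]) (auto intro!: continuous_intros)
  qed (auto intro!: continuous_intros simp: hp)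
  have h2w: "continuous (at y within T) h2" if "y \<in> {-pi..pi}" "T \<subseteq> {-pi..pi}" for y T
    using h2c that continuous_on_eq_continuous_within continuous_within_subset by blast
  have eq: "h (Arg z) = h2 (Arg (-z))" if "z \<noteq> 0" for z
    using Arg_minus[OF that] Arg_bounded[of z] unfolding h2_def by auto
  show ?thesis
    unfolding continuous_on_eq_continuous_within
  proof
    fix z0 :: complex assume z0: "z0 \<in> sphere 0 1"
    show "continuous (at z0 within sphere 0 1) (\<lambda>z. h (Arg z))"
    proof (cases "z0 \<in> \<real>\<^sub>\<le>\<^sub>0")
      case False
      show ?thesis
        by (rule continuous_within_compose2[OF continuous_within_Arg[OF False]], rule hw, use Argr in auto)
    next
      case True
      then have "z0 = -1" using z0
        by (auto simp: nonpos_Reals_def dist_norm)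
      have m: "-z0 \<notin> \<real>\<^sub>\<le>\<^sub>0" using \<open>z0 = -1\<close> by auto
      have "continuous (at z0 within sphere 0 1) (\<lambda>z. h2 (Arg (-z)))"
      proof (rule continuous_within_compose2[of _ _ "\<lambda>z. Arg (-z)"])
        show "continuous (at z0 within sphere 0 1) (\<lambda>z. Arg (- z))"
          by (rule continuous_within_compose2[of _ _ uminus], intro continuous_intros)
             (rule continuous_within_Arg[OF m])
      qed (rule h2w, use Argr in auto)
      then show ?thesis
        by (rule continuous_transform_within[of _ _ _ "1/2"]) (use z0 eq in \<open>auto, metis norm_zero zero_neq_one\<close>)
    qed
  qed
qed

lemma trig_dense:
  assumes hc: "continuous_on {-pi..pi} h" and hp: "h (-pi) = h pi" and e: "e > 0"
  shows "\<exists>p\<in>trig. \<forall>x\<in>{-pi..pi}. \<bar>h x - p x\<bar> < e"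
proof -
  obtain g where g: "real_polynomial_function g" "\<And>z. z \<in> sphere 0 1 \<Longrightarrow> \<bar>h (Arg z) - g z\<bar> < e"
    using Stone_Weierstrass_real_polynomial_function[OF compact_sphere circle_cont[OF hc hp] e] by metis
  have "\<bar>h x - g (cis x)\<bar> < e" if x: "x \<in> {-pi..pi}" for x
  proof -
    have "h (Arg (cis x)) = h x"
    proof (cases "x = -pi")
      case True
      have "cis x = cis pi" using True by (simp add: complex_eq_iff)
      then show ?thesis using True hp Arg_cis[of pi] by simp
    next
      case False then have "x \<in> {-pi<..pi}" using x by auto
      then show ?thesis using Arg_cis[of x] by simp
    qed
    then show ?thesis using g(2)[of "cis x"] by simp
  qed
  then show ?thesis using rpf_trig[OF g(1)] by (intro bexI[of _ "\<lambda>x. g (cis x)"]) auto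
qed



lemma cont_mult_ai:
  fixes a b :: real and k g :: "real \<Rightarrow> real"
  assumes "continuous_on {a..b} k" "g absolutely_integrable_on {a..b}"
  shows "(\<lambda>x. k x * g x) absolutely_integrable_on {a..b}"
proof (rule absolutely_integrable_bounded_measurable_product_real)
  show "k \<in> borel_measurable (lebesgue_on {a..b})"
    by (rule continuous_imp_measurable_on_sets_lebesgue[OF assms(1)]) simp
  show "bounded (k ` {a..b})"
    by (rule compact_imp_bounded, rule compact_continuous_image[OF assms(1)]) simp
qed (use assms in auto)

lemma per_pi: "per2pi \<psi> \<Longrightarrow> \<psi> pi = \<psi> (-pi)"
  unfolding per2pi_def by (metis add.commute diff_add_cancel mult_2 add_uminus_conv_diff)

lemma trig_int_const:
  assumes "p \<in> trig"
  obtains c \<psi> where "\<psi> \<in> trig" "\<And>x. deriv \<psi> x = p x - c" "integral {-pi..pi} p = 2 * pi * c"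
proof -
  obtain c \<psi> where \<psi>: "\<psi> \<in> trig" "\<And>x. (\<psi> has_real_derivative (p x - c)) (at x)"
    using trig_antider[OF assms] by blast
  have d: "deriv \<psi> x = p x - c" for x using \<psi>(2) by (rule DERIV_imp_deriv)
  have "((\<lambda>x. p x - c) has_integral (\<psi> pi - \<psi> (-pi))) {-pi..pi}"
    by (rule fundamental_theorem_of_calculus)
       (use \<psi>(2) in \<open>auto simp: has_real_derivative_iff_has_vector_derivative[symmetric] intro: has_field_derivative_at_within\<close>)
  then have "((\<lambda>x. p x - c) has_integral 0) {-pi..pi}" using per_pi[OF trig_per[OF \<psi>(1)]] by simp
  moreover have "p integrable_on {-pi..pi}" using trig_cont[OF assms] integrable_continuous_real by blast
  moreover have "((\<lambda>x. c) has_integral (2 * pi * c)) {-pi..pi}"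
    using has_integral_const_real[of c "-pi" pi] by (simp add: algebra_simps)
  ultimately have "((\<lambda>x. p x - c) has_integral (integral {-pi..pi} p - 2 * pi * c)) {-pi..pi}"
    "((\<lambda>x. p x - c) has_integral 0) {-pi..pi}"
    using has_integral_diff integrable_integral by blast+
  then have "integral {-pi..pi} p - 2 * pi * c = 0" using has_integral_unique by blast
  then show ?thesis using that \<psi>(1) d by auto
qed

lemma cont_mult_int:
  fixes a b :: real and k g :: "real \<Rightarrow> real"
  assumes "continuous_on {a..b} k" "g absolutely_integrable_on {a..b}"
  shows "(\<lambda>x. g x * k x) integrable_on {a..b}"
  using cont_mult_ai[OF assms] by (simp add: absolutely_integrable_on_def mult.commute)

lemma small_zero:
  fixes X K :: real
  assumes "\<And>e. e > 0 \<Longrightarrow> \<bar>X\<bar> \<le> e * K"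
  shows "X = 0"
proof (rule ccontr)
  assume "X \<noteq> 0"
  define e where "e = \<bar>X\<bar> / (2 * (\<bar>K\<bar> + 1))"
  have e: "e > 0" using \<open>X \<noteq> 0\<close> unfolding e_def by (simp add: add_pos_nonneg)
  have "e * K \<le> e * \<bar>K\<bar>" using e by (simp add: mult_left_mono)
  also have "\<dots> < e * (2 * (\<bar>K\<bar> + 1))" using e by (intro mult_strict_left_mono) auto
  also have "\<dots> = \<bar>X\<bar>" unfolding e_def by (simp add: field_simps)
  finally show False using assms[OF e] by simp
qed

lemma dubois:
  fixes g h :: "real \<Rightarrow> real"
  assumes gi: "g absolutely_integrable_on {-pi..pi}"
    and test: "\<And>\<psi>. \<psi> \<in> trig \<Longrightarrow> integral {-pi..pi} (\<lambda>x. g x * deriv \<psi> x) = 0"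
    and hc: "continuous_on {-pi..pi} h" and hp: "h (-pi) = h pi"
  shows "integral {-pi..pi} (\<lambda>x. g x * h x) = integral {-pi..pi} g / (2*pi) * integral {-pi..pi} h"
proof -
  define m where "m = integral {-pi..pi} g / (2*pi)"
  have gint: "g integrable_on {-pi..pi}" using gi absolutely_integrable_on_def by blast
  have key: "integral {-pi..pi} (\<lambda>x. g x * p x) = m * integral {-pi..pi} p" if p: "p \<in> trig" for p
  proof -
    obtain c \<psi> where \<psi>: "\<psi> \<in> trig" "\<And>x. deriv \<psi> x = p x - c" "integral {-pi..pi} p = 2 * pi * c"
      using trig_int_const[OF p] by blast
    have "0 = integral {-pi..pi} (\<lambda>x. g x * (p x - c))" using test[OF \<psi>(1)] \<psi>(2) by simp
    also have "\<dots> = integral {-pi..pi} (\<lambda>x. g x * p x - c * g x)" by (simp add: algebra_simps)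
    also have "\<dots> = integral {-pi..pi} (\<lambda>x. g x * p x) - c * integral {-pi..pi} g"
      using integral_diff[OF cont_mult_int[OF trig_cont[OF p] gi] integrable_on_mult_right[OF gint, of c]]
      by (simp add: integral_mult_right)
    finally show ?thesis using \<psi>(3) unfolding m_def by (simp add: field_simps)
  qed
  define G where "G = integral {-pi..pi} (\<lambda>x. \<bar>g x\<bar>)"
  have gabs: "(\<lambda>x. \<bar>g x\<bar>) integrable_on {-pi..pi}" using gi unfolding absolutely_integrable_on_def by (simp add: real_norm_def)
  have hint: "h integrable_on {-pi..pi}" using hc integrable_continuous_real by blast
  have "\<bar>integral {-pi..pi} (\<lambda>x. g x * h x) - m * integral {-pi..pi} h\<bar> \<le> e * (G + \<bar>m\<bar> * (2*pi))" if e: "e > 0" for e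
  proof -
    obtain p where p: "p \<in> trig" "\<And>x. x \<in> {-pi..pi} \<Longrightarrow> \<bar>h x - p x\<bar> < e"
      using trig_dense[OF hc hp e] by blast
    have pint: "p integrable_on {-pi..pi}" using trig_cont[OF p(1)] integrable_continuous_real by blast
    have "integral {-pi..pi} (\<lambda>x. g x * h x) - integral {-pi..pi} (\<lambda>x. g x * p x)
        = integral {-pi..pi} (\<lambda>x. g x * (h x - p x))"
      by (subst integral_diff[symmetric]) (auto intro!: cont_mult_int trig_cont p hc gi simp: algebra_simps)
    also have "\<bar>\<dots>\<bar> \<le> integral {-pi..pi} (\<lambda>x. e * \<bar>g x\<bar>)"
    proof -
      have "norm (integral {-pi..pi} (\<lambda>x. g x * (h x - p x))) \<le> integral {-pi..pi} (\<lambda>x. e * \<bar>g x\<bar>)"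
      proof (rule integral_norm_bound_integral)
        show "(\<lambda>x. g x * (h x - p x)) integrable_on {-pi..pi}"
          by (intro cont_mult_int continuous_intros hc trig_cont p gi)
        show "(\<lambda>x. e * \<bar>g x\<bar>) integrable_on {-pi..pi}" using gabs by (rule integrable_on_mult_right)
        fix x assume "x \<in> {-pi..pi}"
        then have "\<bar>h x - p x\<bar> \<le> e" using p(2) less_imp_le by blast
        then show "norm (g x * (h x - p x)) \<le> e * \<bar>g x\<bar>"
          by (simp add: abs_mult) (metis abs_ge_zero mult.commute mult_right_mono)
      qed
      then show ?thesis by simp
    qed
    also have "\<dots> = e * G" unfolding G_def by (rule integral_mult_right)
    finally have d1: "\<bar>integral {-pi..pi} (\<lambda>x. g x * h x) - integral {-pi..pi} (\<lambda>x. g x * p x)\<bar> \<le> e * G" .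
    have "\<bar>integral {-pi..pi} p - integral {-pi..pi} h\<bar> = \<bar>integral {-pi..pi} (\<lambda>x. p x - h x)\<bar>"
      using integral_diff[OF pint hint] by simp
    also have "\<dots> \<le> integral {-pi..pi} (\<lambda>x. e)"
    proof -
      have "norm (integral {-pi..pi} (\<lambda>x. p x - h x)) \<le> integral {-pi..pi} (\<lambda>x. e)"
      proof (rule integral_norm_bound_integral)
        show "(\<lambda>x. p x - h x) integrable_on {-pi..pi}" using pint hint by (rule integrable_diff)
        fix x assume "x \<in> {-pi..pi}"
        then show "norm (p x - h x) \<le> e" using p(2) by (smt (verit) real_norm_def)
      qed (rule integrable_const_ivl)
      then show ?thesis by simp
    qed
    also have "\<dots> = e * (2 * pi)" by simp
    finally have d2: "\<bar>integral {-pi..pi} p - integral {-pi..pi} h\<bar> \<le> e * (2 * pi)" .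
    have "\<bar>m\<bar> * \<bar>integral {-pi..pi} p - integral {-pi..pi} h\<bar> \<le> \<bar>m\<bar> * (e * (2 * pi))"
      using d2 by (simp add: mult_left_mono)
    then have "\<bar>m * integral {-pi..pi} p - m * integral {-pi..pi} h\<bar> \<le> \<bar>m\<bar> * (e * (2*pi))"
      by (simp add: abs_mult[symmetric] right_diff_distrib)
    then show ?thesis using d1 key[OF p(1)] by (simp add: algebra_simps)
  qed
  then have "integral {-pi..pi} (\<lambda>x. g x * h x) - m * integral {-pi..pi} h = 0"
    by (intro small_zero) 
  then show ?thesis unfolding m_def by simp
qed



lemma interval_zero:
  fixes f :: "real \<Rightarrow> real"
  assumes fi: "f absolutely_integrable_on {-pi..pi}"
    and orth: "\<And>h. continuous_on {-pi..pi} h \<Longrightarrow> h (-pi) = h pi \<Longrightarrow> integral {-pi..pi} (\<lambda>x. f x * h x) = 0"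
    and sr: "-pi \<le> s" "s < r" "r \<le> pi"
  shows "integral {s..r} f = 0"
proof (rule ccontr)
  define I where "I = integral {s..r} f"
  assume "integral {s..r} f \<noteq> 0"
  then have I0: "I \<noteq> 0" unfolding I_def .
  define \<epsilon> where "\<epsilon> = \<bar>I\<bar> / 4"
  have eps: "\<epsilon> > 0" using I0 unfolding \<epsilon>_def by simp
  have sub: "{s..r} \<subseteq> {-pi..pi}" using sr by auto
  have fint: "f integrable_on {-pi..pi}" using fi absolutely_integrable_on_def by blast
  have fabs: "(\<lambda>x. \<bar>f x\<bar>) integrable_on {-pi..pi}" using fi unfolding absolutely_integrable_on_def by (simp add: real_norm_def)
  have af: "(\<lambda>x. \<bar>f x\<bar>) integrable_on {s..r}" by (rule integrable_on_subinterval[OF fabs sub])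
  have fsr: "f integrable_on {s..r}" by (rule integrable_on_subinterval[OF fint sub])
  have c1: "continuous_on {s..r} (\<lambda>y. integral {s..y} (\<lambda>x. \<bar>f x\<bar>))"
    by (rule indefinite_integral_continuous_1[OF af])
  have c2: "continuous_on {s..r} (\<lambda>y. integral {y..r} (\<lambda>x. \<bar>f x\<bar>))"
    by (rule indefinite_integral_continuous_1'[OF af])
  obtain d1 where d1: "d1 > 0" "\<And>y. y \<in> {s..r} \<Longrightarrow> dist y s < d1 \<Longrightarrow>
      dist (integral {s..y} (\<lambda>x. \<bar>f x\<bar>)) (integral {s..s} (\<lambda>x. \<bar>f x\<bar>)) < \<epsilon>"
    using c1 eps sr(2) unfolding continuous_on_iff by (metis atLeastAtMost_iff less_eq_real_def order_refl)
  obtain d2 where d2: "d2 > 0" "\<And>y. y \<in> {s..r} \<Longrightarrow> dist y r < d2 \<Longrightarrow>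
      dist (integral {y..r} (\<lambda>x. \<bar>f x\<bar>)) (integral {r..r} (\<lambda>x. \<bar>f x\<bar>)) < \<epsilon>"
    using c2 eps sr(2) unfolding continuous_on_iff by (metis atLeastAtMost_iff less_eq_real_def order_refl)
  define M where "M = min (min d1 d2) ((r - s) / 2)"
  define \<delta> where "\<delta> = M / 2"
  have mm: "M \<le> d1" "M \<le> d2" "M > 0" using d1(1) d2(1) sr unfolding M_def by auto
  have mm3: "M \<le> (r - s) / 2" unfolding M_def by (rule min.cobounded2)
  have dpos: "\<delta> > 0" using mm unfolding \<delta>_def by simp
  have d2M: "2 * \<delta> = M" unfolding \<delta>_def by simp
  have dle1: "\<delta> < d1" using mm d2M by linarith
  have dle2: "\<delta> < d2" using mm d2M by linarith
  have dle3: "2 * \<delta> < r - s" using mm3 sr(2) d2M by (simp add: field_simps)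
  note dle = dle1 dle2 dle3
  have J1: "integral {s..s+\<delta>} (\<lambda>x. \<bar>f x\<bar>) < \<epsilon>"
    using d1(2)[of "s+\<delta>"] dle dpos by (simp add: dist_real_def)
  have J2: "integral {r-\<delta>..r} (\<lambda>x. \<bar>f x\<bar>) < \<epsilon>"
    using d2(2)[of "r-\<delta>"] dle dpos by (simp add: dist_real_def)
  define h where "h x = max 0 (min 1 (min ((x - s) / \<delta>) ((r - x) / \<delta>)))" for x
  have hc: "continuous_on {-pi..pi} h" unfolding h_def by (intro continuous_intros) (use dpos in auto)
  have hx0: "h x = 0" if "x < s \<or> x > r" for x
  proof -
    have "min ((x - s) / \<delta>) ((r - x) / \<delta>) \<le> 0" using that dpos
      by (auto simp: min_le_iff_disj divide_nonpos_pos)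
    then show ?thesis unfolding h_def by simp
  qed
  have hx1: "h x = 1" if "s + \<delta> \<le> x" "x \<le> r - \<delta>" for x
  proof -
    have "1 \<le> (x - s) / \<delta>" "1 \<le> (r - x) / \<delta>" using that dpos by (simp_all add: field_simps)
    then show ?thesis unfolding h_def by simp
  qed
  have h01: "0 \<le> h x" "h x \<le> 1" for x unfolding h_def by auto
  have hp: "h (-pi) = h pi" using hx0[of "-pi"] hx0[of pi] sr dle dpos
    by (cases "s = -pi"; cases "r = pi") (auto simp: h_def)
  have o: "integral {-pi..pi} (\<lambda>x. f x * h x) = 0" by (rule orth[OF hc hp])
  have fh: "(\<lambda>x. f x * h x) integrable_on {-pi..pi}" by (rule cont_mult_int[OF hc fi])
  have ri: "(\<lambda>x. if x \<in> {s..r} then f x else 0) integrable_on {-pi..pi}"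
    by (subst integrable_restrict_Int) (simp add: Int_absorb2[OF sub] fsr del: Int_atLeastAtMost)
  have rI: "integral {-pi..pi} (\<lambda>x. if x \<in> {s..r} then f x else 0) = I"
    unfolding I_def Henstock_Kurzweil_Integration.integral_restrict_Int by (simp add: Int_absorb2[OF sub] del: Int_atLeastAtMost)
  define B where "B x = (if x \<in> {s..s+\<delta>} then \<bar>f x\<bar> else 0) + (if x \<in> {r-\<delta>..r} then \<bar>f x\<bar> else 0)" for x
  have sub1: "{s..s+\<delta>} \<subseteq> {-pi..pi}" "{r-\<delta>..r} \<subseteq> {-pi..pi}" using sr dle dpos by auto
  have Bi1: "(\<lambda>x. if x \<in> {s..s+\<delta>} then \<bar>f x\<bar> else 0) integrable_on {-pi..pi}"
    by (subst integrable_restrict_Int) (simp add: Int_absorb2[OF sub1(1)] integrable_on_subinterval[OF fabs sub1(1)] del: Int_atLeastAtMost)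
  have Bi2: "(\<lambda>x. if x \<in> {r-\<delta>..r} then \<bar>f x\<bar> else 0) integrable_on {-pi..pi}"
    by (subst integrable_restrict_Int) (simp add: Int_absorb2[OF sub1(2)] integrable_on_subinterval[OF fabs sub1(2)] del: Int_atLeastAtMost)
  have Bint: "integral {-pi..pi} B = integral {s..s+\<delta>} (\<lambda>x. \<bar>f x\<bar>) + integral {r-\<delta>..r} (\<lambda>x. \<bar>f x\<bar>)"
    unfolding B_def integral_add[OF Bi1 Bi2] Henstock_Kurzweil_Integration.integral_restrict_Int
    by (simp add: Int_absorb2[OF sub1(1)] Int_absorb2[OF sub1(2)] del: Int_atLeastAtMost)
  have "\<bar>I\<bar> = norm (integral {-pi..pi} (\<lambda>x. (if x \<in> {s..r} then f x else 0) - f x * h x))"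
    using integral_diff[OF ri fh] rI o by simp
  also have "\<dots> \<le> integral {-pi..pi} B"
  proof (rule integral_norm_bound_integral)
    show "(\<lambda>x. (if x \<in> {s..r} then f x else 0) - f x * h x) integrable_on {-pi..pi}"
      using ri fh by (rule integrable_diff)
    show "B integrable_on {-pi..pi}" unfolding B_def using Bi1 Bi2 by (rule integrable_add)
    fix x assume "x \<in> {-pi..pi}"
    show "norm ((if x \<in> {s..r} then f x else 0) - f x * h x) \<le> B x"
    proof (cases "x < s \<or> x > r")
      case True then show ?thesis using hx0[OF True] by (auto simp: B_def)
    next
      case False
      then have xs: "x \<in> {s..r}" by auto
      have n: "norm ((if x \<in> {s..r} then f x else 0) - f x * h x) = \<bar>f x\<bar> * (1 - h x)"
      proof -
        have "(if x \<in> {s..r} then f x else 0) - f x * h x = f x * (1 - h x)" using xs by (simp add: algebra_simps)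
        moreover have "\<bar>1 - h x\<bar> = 1 - h x" using h01[of x] by simp
        ultimately show ?thesis by (simp add: abs_mult)
      qed
      show ?thesis
      proof (cases "s + \<delta> \<le> x \<and> x \<le> r - \<delta>")
        case True then show ?thesis using n hx1 by (auto simp: B_def)
      next
        case False
        then have "x \<in> {s..s+\<delta>} \<or> x \<in> {r-\<delta>..r}" using xs by auto
        moreover have "\<bar>f x\<bar> * (1 - h x) \<le> \<bar>f x\<bar>" using h01[of x] by (simp add: mult_left_le)
        ultimately show ?thesis using n by (auto simp: B_def)
      qed
    qed
  qed
  also have "\<dots> < 2 * \<epsilon>" using Bint J1 J2 by simp
  finally show False unfolding \<epsilon>_def using I0 by simp
qed



lemma lam_neg: "-pi < x \<Longrightarrow> x < 0 \<Longrightarrow> lam x = -1"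
  unfolding lam_def using sin_gt_zero[of "-x"] by auto

lemma lam_pos: "0 < x \<Longrightarrow> x < pi \<Longrightarrow> lam x = 1"
  unfolding lam_def using sin_gt_zero[of x] by auto

lemma lam_bound: "\<bar>lam x\<bar> \<le> 1"
  unfolding lam_def by auto

lemma lam_int:
  fixes k :: "real \<Rightarrow> real"
  assumes kc: "continuous_on {-pi..pi} k"
  shows "((\<lambda>x. lam x * k x) has_integral (integral {0..pi} k - integral {-pi..0} k)) {-pi..pi}"
proof -
  have k1: "continuous_on {-pi..0} k" "continuous_on {0..pi} k" using kc by (auto elim: continuous_on_subset)
  have n1: "((\<lambda>x. - k x) has_integral - integral {-pi..0} k) {-pi..0}"
    using has_integral_neg[OF integrable_integral[OF integrable_continuous_real[OF k1(1)]]] .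
  have i1: "((\<lambda>x. lam x * k x) has_integral - integral {-pi..0} k) {-pi..0}"
    by (rule has_integral_spike_finite[of "{-pi, 0}", OF _ _ n1]) (auto simp: lam_neg)
  have n2: "(k has_integral integral {0..pi} k) {0..pi}"
    using integrable_integral[OF integrable_continuous_real[OF k1(2)]] .
  have i2: "((\<lambda>x. lam x * k x) has_integral integral {0..pi} k) {0..pi}"
    by (rule has_integral_spike_finite[of "{0, pi}", OF _ _ n2]) (auto simp: lam_pos)
  show ?thesis using has_integral_combine[OF _ _ i1 i2] by simp
qed

lemma ftc_C1:
  fixes \<psi> \<psi>' :: "real \<Rightarrow> real"
  assumes d: "\<And>x. (\<psi> has_real_derivative \<psi>' x) (at x)" and "a \<le> b"
  shows "(\<psi>' has_integral (\<psi> b - \<psi> a)) {a..b}"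
  by (rule fundamental_theorem_of_calculus[OF \<open>a \<le> b\<close>])
     (use d in \<open>auto simp: has_real_derivative_iff_has_vector_derivative[symmetric] intro: has_field_derivative_at_within\<close>)

lemma tau_test:
  fixes \<psi> \<psi>' :: "real \<Rightarrow> real"
  assumes d: "\<And>x. (\<psi> has_real_derivative \<psi>' x) (at x)" and c: "continuous_on UNIV \<psi>'"
    and per: "\<psi> pi = \<psi> (-pi)"
  shows "((\<lambda>x. tau t x * \<psi>' x) has_integral (2 * (\<psi> pi - \<psi> 0))) {-pi..pi}"
proof -
  have c': "continuous_on {-pi..pi} \<psi>'" using c by (rule continuous_on_subset) simp
  have l: "((\<lambda>x. lam x * \<psi>' x) has_integral ((\<psi> pi - \<psi> 0) - (\<psi> 0 - \<psi> (-pi)))) {-pi..pi}"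
    using lam_int[OF c'] integral_unique[OF ftc_C1[OF d, of 0 pi]] integral_unique[OF ftc_C1[OF d, of "-pi" 0]]
    by simp
  have tt: "((\<lambda>x. t * \<psi>' x) has_integral (t * (\<psi> pi - \<psi> (-pi)))) {-pi..pi}"
    using has_integral_mult_right[OF ftc_C1[OF d, of "-pi" pi]] by simp
  have "((\<lambda>x. t * \<psi>' x + lam x * \<psi>' x) has_integral (t * (\<psi> pi - \<psi> (-pi)) + ((\<psi> pi - \<psi> 0) - (\<psi> 0 - \<psi> (-pi))))) {-pi..pi}"
    by (rule has_integral_add[OF tt l])
  then show ?thesis using per unfolding tau_def by (simp add: algebra_simps)
qed

lemma wd_hasint: "is_weak_deriv f g \<Longrightarrow> a \<le> b \<Longrightarrow> (g has_integral (f b - f a)) {a..b}"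
  unfolding is_weak_deriv_def by simp

lemma wd_int: "is_weak_deriv f g \<Longrightarrow> a \<le> b \<Longrightarrow> g integrable_on {a..b}"
  using wd_hasint has_integral_integrable by blast

lemma wd_formula: "is_weak_deriv f g \<Longrightarrow> a \<le> y \<Longrightarrow> f y = f a + integral {a..y} g"
  using wd_hasint[THEN integral_unique, of f g a y] by simp

lemma wd_cont:
  assumes "is_weak_deriv f g"
  shows "isCont f x"
proof -
  have "continuous_on {x-1..x+1} (\<lambda>y. integral {x-1..y} g)"
    by (rule indefinite_integral_continuous_1[OF wd_int[OF assms]]) simp
  then have "continuous_on {x-1..x+1} (\<lambda>y. f (x-1) + integral {x-1..y} g)" by (intro continuous_intros)
  then have "continuous_on {x-1..x+1} f"
    by (rule continuous_on_eq) (use wd_formula[OF assms] in auto)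
  then show ?thesis by (rule continuous_on_interior) (auto simp: interior_atLeastAtMost_real)
qed

lemma wd_deriv:
  assumes "is_weak_deriv f g" and gc: "\<And>y. isCont g y"
  shows "(f has_real_derivative g x) (at x)"
proof -
  have gco: "continuous_on {x-1..x+1} g" by (simp add: continuous_at_imp_continuous_on gc)
  have "((\<lambda>y. integral {x-1..y} g) has_vector_derivative g x) (at x within {x-1..x+1})"
    by (rule integral_has_vector_derivative[OF gco]) simp
  then have "((\<lambda>y. integral {x-1..y} g) has_vector_derivative g x) (at x)"
    using at_within_interior[of x "{x-1..x+1}"] by (simp add: interior_atLeastAtMost_real)
  then have "((\<lambda>y. f (x-1) + integral {x-1..y} g) has_real_derivative g x) (at x)"
    by (auto intro!: derivative_eq_intros simp: has_real_derivative_iff_has_vector_derivative)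
  then show ?thesis
  proof (rule has_field_derivative_transform_within_open[of _ _ _ "{x-1<..<x+1}"])
    fix z assume "z \<in> {x-1<..<x+1}"
    then show "f (x-1) + integral {x-1..z} g = f z" using wd_formula[OF assms(1), of "x-1" z] by simp
  qed auto
qed



lemma borel_leb: fixes f :: "real \<Rightarrow> real" assumes "f \<in> borel_measurable borel" shows "f \<in> borel_measurable (lebesgue_on S)"
proof -
  have "f \<in> borel_measurable lborel" using assms by simp
  then have "f \<in> borel_measurable lebesgue" by (rule measurable_completion)
  then show ?thesis by (rule measurable_restrict_space1)
qed

lemma lam_meas[measurable]: "lam \<in> borel_measurable borel" unfolding lam_def by measurable

lemma bdd_int:
  fixes f :: "real \<Rightarrow> real"
  assumes "f \<in> borel_measurable borel" "\<And>x. x \<in> {a..b} \<Longrightarrow> \<bar>f x\<bar> \<le> B"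
  shows "f integrable_on {a..b}"
  by (rule measurable_bounded_by_integrable_imp_integrable_real[OF borel_leb[OF assms(1)] integrable_const_ivl[of B a b]])
     (use assms(2) in auto)

lemma bdd_absint:
  fixes f :: "real \<Rightarrow> real"
  assumes "f \<in> borel_measurable borel" "\<And>x. x \<in> {a..b} \<Longrightarrow> \<bar>f x\<bar> \<le> B"
  shows "f absolutely_integrable_on {a..b}"
  by (rule measurable_bounded_by_integrable_imp_absolutely_integrable[OF borel_leb[OF assms(1)] _ integrable_const_ivl[of B a b]])
     (use assms(2) in auto)

lemma Lp2:
  fixes f :: "real \<Rightarrow> real"
  assumes fm: "f \<in> borel_measurable borel" and b: "\<And>x. x \<in> {-pi..pi} \<Longrightarrow> \<bar>f x\<bar> \<le> B"
  shows "Lp_S1 2 f"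
  unfolding Lp_S1_def
proof
  show "f measurable_on {-pi..pi}"
    by (rule measurable_on_iff_borel_measurable[THEN iffD2]) (auto intro: borel_leb fm)
  have m: "(\<lambda>x. \<bar>f x\<bar> powr 2) \<in> borel_measurable borel" using fm by measurable
  show "(\<lambda>x. \<bar>f x\<bar> powr 2) integrable_on {-pi..pi}"
  proof (rule bdd_int[OF m])
    fix x assume x: "x \<in> {-pi..pi}"
    have "\<bar>f x\<bar> \<le> \<bar>B\<bar>" using b[OF x] by simp
    then have "\<bar>f x\<bar> powr 2 \<le> \<bar>B\<bar> powr 2" by (intro powr_mono2) auto
    then show "\<bar>\<bar>f x\<bar> powr 2\<bar> \<le> \<bar>B\<bar> powr 2" by simp
  qed
qed

lemma cont_bdd:
  fixes f :: "real \<Rightarrow> real"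
  assumes "continuous_on {a..b} f"
  obtains B where "\<And>x. x \<in> {a..b} \<Longrightarrow> \<bar>f x\<bar> \<le> B"
proof -
  have "bounded (f ` {a..b})" by (rule compact_imp_bounded, rule compact_continuous_image[OF assms]) simp
  then show ?thesis using that unfolding bounded_real by blast
qed

lemma prim:
  fixes f :: "real \<Rightarrow> real"
  assumes fi: "\<And>a b. f integrable_on {a..b}"
  shows "is_weak_deriv (\<lambda>x. if 0 \<le> x then integral {0..x} f else - integral {x..0} f) f"
  unfolding is_weak_deriv_def
proof (intro allI impI)
  fix a b :: real assume ab: "a \<le> b"
  have I: "(f has_integral integral {c..d} f) {c..d}" for c d using fi by (rule integrable_integral)
  show "(f has_integral ((if 0 \<le> b then integral {0..b} f else - integral {b..0} f) - (if 0 \<le> a then integral {0..a} f else - integral {a..0} f))) {a..b}"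
  proof (cases "0 \<le> a")
    case True
    have "integral {0..b} f = integral {0..a} f + integral {a..b} f"
      using integral_unique[OF has_integral_combine[OF True ab I I]] by simp
    then show ?thesis using True ab I[of a b] by simp
  next
    case False
    show ?thesis
    proof (cases "0 \<le> b")
      case True
      have "integral {a..b} f = integral {a..0} f + integral {0..b} f"
        using integral_unique[OF has_integral_combine[of a 0 b, OF _ True I I]] False by simp
      then show ?thesis using True False I[of a b] by (simp add: add.commute)
    next
      case False2: False
      have "integral {a..0} f = integral {a..b} f + integral {b..0} f"
        using integral_unique[OF has_integral_combine[of a b 0, OF ab _ I I]] False2 by simp
      then show ?thesis using False False2 I[of a b] by (simp add: algebra_simps)
    qed
  qed
qed

lemma wd_shift:
  assumes wd: "is_weak_deriv F f" and per: "per2pi f" and ab: "a \<le> b"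
  shows "F (b + 2*pi) - F (a + 2*pi) = F b - F a"
proof -
  have "(f has_integral (F b - F a)) {a..b}" using wd_hasint[OF wd ab] .
  moreover have "f \<circ> (+) (2*pi) = f" using per unfolding per2pi_def by (auto simp: add.commute)
  ultimately have "(f has_integral (F b - F a)) {a + 2*pi..b + 2*pi}"
    using has_integral_shift_Icc_real[of f "2*pi" "F b - F a" a b] by simp
  moreover have "(f has_integral (F (b + 2*pi) - F (a + 2*pi))) {a + 2*pi..b + 2*pi}"
    using wd_hasint[OF wd] ab by simp
  ultimately show ?thesis using has_integral_unique by blast
qed

lemma prim_per:
  assumes wd: "is_weak_deriv F f" and per: "per2pi f" and e: "F pi = F (-pi)"
  shows "per2pi F"
  unfolding per2pi_def
proof
  fix x
  show "F (x + 2 * pi) = F x"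
  proof (cases "-pi \<le> x")
    case True
    show ?thesis using wd_shift[OF wd per True] e by simp
  next
    case False
    then show ?thesis using wd_shift[OF wd per, of x "-pi"] e by simp
  qed
qed

lemma smooth_cont: "smooth_fun f \<Longrightarrow> isCont f x"
  unfolding smooth_fun_def using differentiable_imp_continuous_within[of f x UNIV]
  by (metis funpow_0)

lemma smooth_deriv: "smooth_fun f \<Longrightarrow> (f has_real_derivative deriv f x) (at x)"
  unfolding smooth_fun_def by (metis DERIV_deriv_iff_real_differentiable funpow_0)

lemma smooth_deriv_cont: "smooth_fun f \<Longrightarrow> isCont (deriv f) x"
proof -
  assume "smooth_fun f"
  then have "(deriv ^^ 1) f differentiable (at x)" unfolding smooth_fun_def by blast
  then show ?thesis using differentiable_imp_continuous_within[of "deriv f" x UNIV] by simp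
qed

lemma tau_meas[measurable]: "tau t \<in> borel_measurable borel" unfolding tau_def by measurable

lemma tau_bound: "\<bar>tau t x\<bar> \<le> \<bar>t\<bar> + 1"
  unfolding tau_def using lam_bound[of x] by linarith

lemma lam_per: "lam (x + 2*pi) = lam x" unfolding lam_def by simp



lemma N_cont: "smooth_fun N \<Longrightarrow> continuous_on S N"
  using smooth_cont continuous_at_imp_continuous_on by blast

lemma N_int_pos:
  assumes "smooth_fun N" "\<forall>x. N x > 0"
  shows "integral {-pi..pi} N > 0"
proof -
  have c: "continuous_on {-pi..pi} N" by (rule N_cont[OF assms(1)])
  have "integral {-pi..pi} N \<noteq> 0"
    using integral_eq_0_iff[OF c, of] assms(2) pi_gt_zero by (smt (verit) atLeastAtMost_iff)
  moreover have "integral {-pi..pi} N \<ge> 0"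
    by (rule integral_nonneg) (use integrable_continuous_real[OF c] assms(2) less_imp_le in auto)
  ultimately show ?thesis by simp
qed

lemma NT_zero:
  assumes sm: "smooth_fun N" and pos: "\<forall>x. N x > 0" and t: "t = gammaN N"
  shows "((\<lambda>x. N x * tau t x) has_integral 0) {-pi..pi}"
proof -
  have c: "continuous_on {-pi..pi} N" by (rule N_cont[OF sm])
  define L where "L = integral {0..pi} N - integral {-pi..0} N"
  have l: "((\<lambda>x. lam x * N x) has_integral L) {-pi..pi}" unfolding L_def by (rule lam_int[OF c])
  have IN: "integral {-pi..pi} N > 0" by (rule N_int_pos[OF sm pos])
  have tv: "t = - L / integral {-pi..pi} N" using t integral_unique[OF l] unfolding gammaN_def by simp
  have tn: "((\<lambda>x. t * N x) has_integral (t * integral {-pi..pi} N)) {-pi..pi}"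
    by (rule has_integral_mult_right, rule integrable_integral, rule integrable_continuous_real[OF c])
  have "t * integral {-pi..pi} N = - L" using tv IN by simp
  then have "((\<lambda>x. t * N x + lam x * N x) has_integral 0) {-pi..pi}"
    using has_integral_add[OF tn l] by simp
  then show ?thesis unfolding tau_def by (simp add: algebra_simps)
qed

lemma q_pos: "n \<ge> 3 \<Longrightarrow> qexp n > 2"
  unfolding qexp_def by (simp add: field_simps)

lemma const_W1: "W1p_S1 2 (\<lambda>x. c) (\<lambda>x. 0)"
  unfolding W1p_S1_def per2pi_def is_weak_deriv_def
  by (auto intro!: Lp2[where B="\<bar>c\<bar>"])

lemma existence:
  fixes n :: nat and N :: "real \<Rightarrow> real" and t :: real
  assumes n: "n \<ge> 3" and sm: "smooth_fun N" and per: "per2pi N" and pos: "\<forall>x. N x > 0"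
    and t: "t = gammaN N"
  shows "\<exists>(a::real) b F. a < b \<and>
              (\<forall>s\<in>{a<..<b}. is_solution n N t 0 0 (fst (F s)) (snd (F s))) \<and>
              (\<forall>s1\<in>{a<..<b}. \<forall>s2\<in>{a<..<b}. s1 \<noteq> s2 \<longrightarrow> \<not> same_solution (F s1) (F s2))"
proof -
  define q where "q = qexp n"
  define wp where "wp s x = 2 * N x * (s powr q * tau t x)" for s x
  define W where "W s = (\<lambda>x. if 0 \<le> x then integral {0..x} (wp s) else - integral {x..0} (wp s))" for s
  define F where "F s = ((\<lambda>x::real. s), W s)" for s
  have Nm: "N \<in> borel_measurable borel" by (rule borel_measurable_continuous_onI[OF N_cont[OF sm]])
  have sol: "is_solution n N t 0 0 (\<lambda>x. s) (W s)" if s: "s > 0" for s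
  proof -
    have wpm: "wp s \<in> borel_measurable borel" unfolding wp_def using Nm by measurable
    have wpb: "\<exists>B. \<forall>x\<in>{a..b}. \<bar>wp s x\<bar> \<le> B" for a b
    proof -
      obtain B0 where B0: "\<And>x. x \<in> {a..b} \<Longrightarrow> \<bar>N x\<bar> \<le> B0" using cont_bdd[OF N_cont[OF sm]] by blast
      define B where "B = max B0 0"
      have B: "\<And>x. x \<in> {a..b} \<Longrightarrow> \<bar>N x\<bar> \<le> B" "B \<ge> 0" using B0 unfolding B_def by force+
      have "\<bar>wp s x\<bar> \<le> 2 * B * (s powr q * (\<bar>t\<bar> + 1))" if x: "x \<in> {a..b}" for x
      proof -
        have "\<bar>wp s x\<bar> = 2 * \<bar>N x\<bar> * (s powr q * \<bar>tau t x\<bar>)" unfolding wp_def by (simp add: abs_mult)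
        also have "\<dots> \<le> 2 * B * (s powr q * (\<bar>t\<bar> + 1))"
          by (intro mult_mono mult_left_mono B(1)[OF x] tau_bound) (use B(2) in auto)
        finally show ?thesis .
      qed
      then show ?thesis by blast
    qed
    have wpi: "wp s integrable_on {a..b}" for a b using wpb[of a b] bdd_int[OF wpm] by blast
    have wd: "is_weak_deriv (W s) (wp s)" unfolding W_def by (rule prim[OF wpi])
    have z: "(wp s has_integral 0) {-pi..pi}"
    proof -
      have "((\<lambda>x. (2 * s powr q) * (N x * tau t x)) has_integral (2 * s powr q) * 0) {-pi..pi}"
        by (rule has_integral_mult_right[OF NT_zero[OF sm pos t]])
      then show ?thesis unfolding wp_def by (simp add: algebra_simps)
    qed
    have e: "W s pi = W s (-pi)" using has_integral_unique[OF z wd_hasint[OF wd, of "-pi" pi]] by simp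
    have wpper: "per2pi (wp s)" using per unfolding per2pi_def wp_def tau_def by (simp add: lam_per)
    have Wper: "per2pi (W s)" by (rule prim_per[OF wd wpper e])
    have Lwp: "Lp_S1 2 (wp s)" using wpb[of "-pi" pi] Lp2[OF wpm] by blast
    have Wc: "continuous_on UNIV (W s)" using wd_cont[OF wd] continuous_at_imp_continuous_on by blast
    have LW: "Lp_S1 2 (W s)"
    proof -
      obtain B where "\<And>x. x \<in> {-pi..pi} \<Longrightarrow> \<bar>W s x\<bar> \<le> B"
        using cont_bdd[OF continuous_on_subset[OF Wc]] by blast
      then show ?thesis by (rule Lp2[OF borel_measurable_continuous_onI[OF Wc]])
    qed
    have W1: "W1p_S1 2 (W s) (wp s)" unfolding W1p_S1_def using Wper wpper LW Lwp wd by blast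
    have W2: "W2p_pos_S1 2 (\<lambda>x. s) (\<lambda>x. 0) (\<lambda>x. 0)" unfolding W2p_pos_S1_def using s const_W1 by auto
    have v: "wp s x / (2 * N x) = s powr q * tau t x" for x using pos unfolding wp_def
      by (metis (no_types, lifting) mult.assoc nonzero_mult_div_cancel_left less_numeral_extra(3) mult_eq_0_iff zero_neq_numeral)
    have pw: "(s powr q * T)\<^sup>2 * s powr (- q - 1) = T\<^sup>2 * s powr (q - 1)" for T
    proof -
      have "(s powr q * T)\<^sup>2 * s powr (- q - 1) = T\<^sup>2 * (s powr q * s powr q * s powr (- q - 1))"
        by (simp add: power2_eq_square algebra_simps)
      also have "s powr q * s powr q * s powr (- q - 1) = s powr (q - 1)"
        using s by (simp add: powr_add[symmetric])
      finally show ?thesis .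
    qed
    have eq: "- 2 * kap n * qexp n * 0 - 2 * 0\<^sup>2 * s powr (- qexp n - 1)
          - kap n * (0 + wp s x / (2 * N x))\<^sup>2 * s powr (- qexp n - 1)
          + kap n * (tau t x)\<^sup>2 * s powr (qexp n - 1) = 0" for x
      unfolding v q_def[symmetric] using pw[of "tau t x"] by simp
    have test: "- integral {-pi..pi} (\<lambda>x. wp s x / (2 * N x) * deriv \<psi> x)
        = 2 * (s powr qexp n * \<psi> 0 - s powr qexp n * \<psi> pi)"
      if \<psi>: "smooth_fun \<psi>" "per2pi \<psi>" for \<psi>
    proof -
      have ti: "((\<lambda>x. tau t x * deriv \<psi> x) has_integral (2 * (\<psi> pi - \<psi> 0))) {-pi..pi}"
        by (rule tau_test[OF smooth_deriv[OF \<psi>(1)]])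
           (use smooth_deriv_cont[OF \<psi>(1)] continuous_at_imp_continuous_on per_pi[OF \<psi>(2)] in auto)
      have "(\<lambda>x. wp s x / (2 * N x) * deriv \<psi> x) = (\<lambda>x. s powr q * (tau t x * deriv \<psi> x))"
        unfolding v by (simp add: mult.assoc)
      then have "integral {-pi..pi} (\<lambda>x. wp s x / (2 * N x) * deriv \<psi> x) = s powr q * (2 * (\<psi> pi - \<psi> 0))"
        using integral_unique[OF has_integral_mult_right[OF ti, of "s powr q"]] by simp
      then show ?thesis unfolding q_def by (simp add: algebra_simps)
    qed
    show ?thesis unfolding is_solution_def
      by (intro exI[of _ 2] exI[of _ "\<lambda>x. 0"] exI[of _ "wp s"] conjI W2 W1 AE_I2 allI impI eq test)
         (auto simp: eq)
  qed
  have A1: "\<forall>s\<in>{1::real<..<2}. is_solution n N t 0 0 (fst (F s)) (snd (F s))" unfolding F_def using sol by simp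
  have A2: "\<forall>s1\<in>{1::real<..<2}. \<forall>s2\<in>{1::real<..<2}. s1 \<noteq> s2 \<longrightarrow> \<not> same_solution (F s1) (F s2)"
    unfolding F_def same_solution_def by (auto simp: fun_eq_iff)
  have "(1::real) < 2" by simp
  then show ?thesis using A1 A2 by blast
qed



lemma key_ineq:
  fixes P V \<alpha> :: real
  assumes "P > 0"
  shows "2 * \<alpha> * V - \<alpha>\<^sup>2 * P \<le> V\<^sup>2 / P"
proof -
  have "0 \<le> (V - \<alpha> * P)\<^sup>2" by simp
  then have "2 * \<alpha> * V * P - \<alpha>\<^sup>2 * P * P \<le> V\<^sup>2" by (simp add: power2_eq_square algebra_simps)
  then show ?thesis using assms by (simp add: field_simps power2_eq_square)
qed

lemma integral_le_ae:
  fixes f g :: "real \<Rightarrow> real"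
  assumes fi: "f integrable_on {a..b}" and gi: "g integrable_on {a..b}" and Z: "negligible Z"
    and le: "\<And>x. x \<in> {a<..<b} \<Longrightarrow> x \<notin> Z \<Longrightarrow> f x \<le> g x"
  shows "integral {a..b} f \<le> integral {a..b} g"
proof -
  define Z' where "Z' = Z \<union> {a, b}"
  have Z': "negligible Z'" unfolding Z'_def using Z by auto
  define f' where "f' x = (if x \<in> Z' then g x else f x)" for x
  have e: "\<And>x. x \<in> {a..b} - Z' \<Longrightarrow> f' x = f x" unfolding f'_def by auto
  have f'i: "f' integrable_on {a..b}" by (rule integrable_spike[OF fi Z' e])
  have "integral {a..b} f = integral {a..b} f'" by (rule integral_spike[OF Z' e])
  also have "\<dots> \<le> integral {a..b} g"
  proof (rule integral_le[OF f'i gi])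
    fix x assume x: "x \<in> {a..b}"
    show "f' x \<le> g x"
    proof (cases "x \<in> Z'")
      case True then show ?thesis unfolding f'_def by simp
    next
      case False
      then have "x \<in> {a<..<b}" "x \<notin> Z" using x unfolding Z'_def by auto
      then show ?thesis using le False unfolding f'_def by simp
    qed
  qed
  finally show ?thesis .
qed

lemma local_contra:
  fixes \<phi> \<phi>' \<phi>'' v :: "real \<Rightarrow> real" and q \<kappa> \<eta> A t :: real and Z :: "real set"
  assumes q: "q > 2" and k: "\<kappa> > 0" and eta: "\<eta> \<noteq> 0"
    and \<phi>pos: "\<And>x. \<phi> x > 0" and per\<phi>: "per2pi \<phi>"
    and \<phi>d: "\<And>x. (\<phi> has_real_derivative \<phi>' x) (at x)"
    and wd2: "is_weak_deriv \<phi>' \<phi>''"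
    and vai: "v absolutely_integrable_on {-pi..pi}"
    and vint: "\<And>s r. -pi \<le> s \<Longrightarrow> s < r \<Longrightarrow> r \<le> pi \<Longrightarrow> integral {s..r} v = A * integral {s..r} (tau t)"
    and A: "A = \<phi> 0 powr q"
    and Z: "negligible Z"
    and eq: "\<And>x. x \<notin> Z \<Longrightarrow> - 2 * \<kappa> * q * \<phi>'' x - 2 * \<eta>\<^sup>2 * \<phi> x powr (- q - 1)
              - \<kappa> * (0 + v x)\<^sup>2 * \<phi> x powr (- q - 1) + \<kappa> * (tau t x)\<^sup>2 * \<phi> x powr (q - 1) = 0"
  shows False
proof -
  have \<phi>con: "continuous_on {-pi..pi} \<phi>" using \<phi>d DERIV_isCont continuous_at_imp_continuous_on by blast
  have ne: "{-pi..pi} \<noteq> {}" using pi_gt_zero by simp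
  obtain x1 where x1: "x1 \<in> {-pi..pi}" "\<And>y. y \<in> {-pi..pi} \<Longrightarrow> \<phi> x1 \<le> \<phi> y"
    using continuous_attains_inf[OF compact_Icc ne \<phi>con] by blast
  define x0 where "x0 = (if x1 = pi then -pi else x1)"
  have x0r: "-pi \<le> x0" "x0 < pi" using x1(1) by (auto simp: x0_def)
  have \<phi>x0: "\<phi> x0 = \<phi> x1" using per_pi[OF per\<phi>] x0_def by auto
  have min: "\<And>y. y \<in> {-pi..pi} \<Longrightarrow> \<phi> x0 \<le> \<phi> y" using x1(2) \<phi>x0 by simp
  have locmin: "\<forall>y. \<bar>x0 - y\<bar> < pi \<longrightarrow> \<phi> x0 \<le> \<phi> y"
  proof (intro allI impI)
    fix y assume y: "\<bar>x0 - y\<bar> < pi"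
    consider "y < -pi" | "y \<in> {-pi..pi}" | "y > pi" by force
    then show "\<phi> x0 \<le> \<phi> y"
    proof cases
      case 1 then have "y + 2*pi \<in> {-pi..pi}" using y x0r by auto
      moreover have "\<phi> (y + 2*pi) = \<phi> y" using per\<phi> unfolding per2pi_def by simp
      ultimately show ?thesis using min by metis
    next
      case 2 then show ?thesis by (rule min)
    next
      case 3 then have "y - 2*pi \<in> {-pi..pi}" using y x0r by auto
      moreover have "\<phi> (y - 2*pi + 2*pi) = \<phi> (y - 2*pi)" using per\<phi> unfolding per2pi_def by blast
      ultimately show ?thesis using min by (metis diff_add_cancel)
    qed
  qed
  have d0: "\<phi>' x0 = 0" by (rule DERIV_local_min[OF \<phi>d pi_gt_zero locmin])
  define \<phi>m where "\<phi>m = \<phi> x0"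
  have \<phi>m: "\<phi>m > 0" unfolding \<phi>m_def by (rule \<phi>pos)
  have Age: "\<phi>m powr q \<le> A" unfolding A \<phi>m_def using min[of 0] q \<phi>pos[of x0] by (intro powr_mono2) auto
  define \<tau>0 where "\<tau>0 = (if x0 < 0 then t - 1 else t + 1)"
  define D0 where "D0 = (if x0 < 0 then - x0 else pi - x0)"
  have D0: "D0 > 0" "x0 + D0 \<le> pi" using x0r by (auto simp: D0_def)
  have tau0: "tau t x = \<tau>0" if "x0 < x" "x < x0 + D0" for x
  proof (cases "x0 < 0")
    case True
    then have "-pi < x" "x < 0" using that x0r by (auto simp: D0_def)
    then show ?thesis using lam_neg True by (simp add: tau_def \<tau>0_def)
  next
    case False
    then have "0 < x" "x < pi" using that x0r by (auto simp: D0_def)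
    then show ?thesis using lam_pos False by (simp add: tau_def \<tau>0_def)
  qed
  define \<epsilon>0 where "\<epsilon>0 = \<eta>\<^sup>2 / (\<kappa> * (\<tau>0\<^sup>2 + 1))"
  have tp: "\<tau>0\<^sup>2 + 1 > 0" using zero_le_power2[of \<tau>0] by linarith
  have \<epsilon>0: "\<epsilon>0 > 0" using eta k tp unfolding \<epsilon>0_def by (intro divide_pos_pos mult_pos_pos) auto
  have "isCont (\<lambda>u. u powr (2*q)) \<phi>m" using \<phi>m by (intro continuous_intros) auto
  then obtain d1 where d1: "d1 > 0" "\<And>u. u \<noteq> \<phi>m \<Longrightarrow> norm (u - \<phi>m) < d1 \<Longrightarrow> norm (u powr (2*q) - \<phi>m powr (2*q)) < \<epsilon>0"
    using \<epsilon>0 unfolding isCont_def LIM_eq by blast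
  define \<epsilon> where "\<epsilon> = d1 / 2"
  have \<epsilon>p: "\<epsilon> > 0" using d1 unfolding \<epsilon>_def by simp
  define b where "b = \<phi>m + \<epsilon>"
  have bpos: "b > 0" using \<phi>m \<epsilon>p unfolding b_def by simp
  have bq: "b powr (2*q) - \<phi>m powr (2*q) < \<epsilon>0" using d1(2)[of b] \<epsilon>p d1(1) unfolding b_def \<epsilon>_def by auto
  have "isCont \<phi> x0" using \<phi>d DERIV_isCont by blast
  then obtain d2 where d2: "d2 > 0" "\<And>x. x \<noteq> x0 \<Longrightarrow> norm (x - x0) < d2 \<Longrightarrow> norm (\<phi> x - \<phi> x0) < \<epsilon>"
    using \<epsilon>p unfolding isCont_def LIM_eq by blast
  define \<delta> where "\<delta> = min d2 D0 / 2"
  have \<delta>: "\<delta> > 0" "\<delta> < d2" "\<delta> < D0" using d2(1) D0(1) unfolding \<delta>_def by auto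
  have \<phi>b: "\<phi>m \<le> \<phi> x \<and> \<phi> x \<le> b" if "x \<in> {x0..x0+\<delta>}" for x
  proof
    show "\<phi>m \<le> \<phi> x" unfolding \<phi>m_def using min[of x] that x0r \<delta> D0 by auto
    show "\<phi> x \<le> b"
    proof (cases "x = x0")
      case True then show ?thesis using \<epsilon>p unfolding b_def \<phi>m_def by simp
    next
      case False
      then have "norm (\<phi> x - \<phi> x0) < \<epsilon>" using d2(2)[of x] that \<delta> by auto
      then show ?thesis unfolding b_def \<phi>m_def by simp
    qed
  qed
  define Pm where "Pm = b powr (q+1)"
  have Pm: "Pm > 0" unfolding Pm_def using bpos by simp
  define \<alpha> where "\<alpha> = A * \<tau>0 / Pm"
  define C0 where "C0 = - 2 * \<eta>\<^sup>2 / Pm + \<kappa> * \<alpha>\<^sup>2 * Pm + \<kappa> * \<tau>0\<^sup>2 * b powr (q - 1)"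
  define R where "R x = (C0 - 2 * \<kappa> * \<alpha> * v x) / (2 * \<kappa> * q)" for x
  have pt: "\<phi>'' x \<le> R x" if xI: "x \<in> {x0<..<x0+\<delta>}" and xZ: "x \<notin> Z" for x
  proof -
    define u where "u = \<phi> x"
    have u: "\<phi>m \<le> u" "u \<le> b" "u > 0" using \<phi>b[of x] xI \<phi>pos[of x] unfolding u_def by auto
    have tx: "tau t x = \<tau>0" using tau0 xI \<delta> by auto
    have e: "2 * \<kappa> * q * \<phi>'' x = - 2 * \<eta>\<^sup>2 * u powr (- q - 1) - \<kappa> * (v x)\<^sup>2 * u powr (- q - 1) + \<kappa> * \<tau>0\<^sup>2 * u powr (q - 1)"
      using eq[OF xZ] tx unfolding u_def by simp
    define Pu where "Pu = u powr (q+1)"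
    have Pu: "Pu > 0" "Pu \<le> Pm" unfolding Pu_def Pm_def using u q by (auto intro!: powr_mono2)
    have inv: "u powr (- q - 1) = 1 / Pu" unfolding Pu_def
      using powr_minus[of u "q+1"] by (simp add: divide_inverse)
    have i1: "- 2 * \<eta>\<^sup>2 * u powr (- q - 1) \<le> - 2 * \<eta>\<^sup>2 / Pm"
    proof -
      have "\<eta>\<^sup>2 / Pm \<le> \<eta>\<^sup>2 / Pu" using Pu Pm by (intro divide_left_mono) auto
      then show ?thesis unfolding inv by simp
    qed
    have i2: "\<kappa> * (2 * \<alpha> * v x - \<alpha>\<^sup>2 * Pm) \<le> \<kappa> * ((v x)\<^sup>2 * u powr (- q - 1))"
    proof -
      have "2 * \<alpha> * v x - \<alpha>\<^sup>2 * Pm \<le> 2 * \<alpha> * v x - \<alpha>\<^sup>2 * Pu" using Pu by (simp add: mult_left_mono)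
      also have "\<dots> \<le> (v x)\<^sup>2 / Pu" by (rule key_ineq[OF Pu(1)])
      finally have "2 * \<alpha> * v x - \<alpha>\<^sup>2 * Pm \<le> (v x)\<^sup>2 / Pu" .
      then have "\<kappa> * (2 * \<alpha> * v x - \<alpha>\<^sup>2 * Pm) \<le> \<kappa> * ((v x)\<^sup>2 / Pu)" using k by (intro mult_left_mono) auto
      then show ?thesis unfolding inv by simp
    qed
    have i3: "\<kappa> * \<tau>0\<^sup>2 * u powr (q - 1) \<le> \<kappa> * \<tau>0\<^sup>2 * b powr (q - 1)"
      using u q k by (intro mult_left_mono powr_mono2) auto
    have "2 * \<kappa> * q * \<phi>'' x \<le> C0 - 2 * \<kappa> * \<alpha> * v x"
      unfolding e C0_def using i1 i2 i3 by (simp add: algebra_simps)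
    then show ?thesis unfolding R_def using k q by (simp add: field_simps)
  qed
  define c where "c = \<eta>\<^sup>2 / (2 * \<kappa> * q * Pm)"
  have cpos: "c > 0" using eta k q Pm unfolding c_def by simp
  have Cb: "C0 - 2 * \<kappa> * \<alpha> * A * \<tau>0 \<le> - \<eta>\<^sup>2 / Pm"
  proof -
    have bb: "b powr (q - 1) * Pm = b powr (2*q)" unfolding Pm_def using bpos
      by (simp add: powr_add[symmetric])
    have A2: "\<phi>m powr (2*q) \<le> A\<^sup>2"
    proof -
      have "\<phi>m powr (2*q) = (\<phi>m powr q)\<^sup>2" using \<phi>m by (simp add: power2_eq_square powr_add[symmetric])
      also have "\<dots> \<le> A\<^sup>2" using Age by (intro power_mono) auto
      finally show ?thesis .
    qed
    have "\<kappa> * \<tau>0\<^sup>2 * (b powr (2*q) - \<phi>m powr (2*q)) \<le> \<kappa> * \<tau>0\<^sup>2 * \<epsilon>0"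
      using bq k by (intro mult_left_mono) auto
    also have "\<dots> = \<tau>0\<^sup>2 * (\<kappa> * \<epsilon>0)" by (simp add: algebra_simps)
    also have "\<kappa> * \<epsilon>0 = \<eta>\<^sup>2 / (\<tau>0\<^sup>2 + 1)" unfolding \<epsilon>0_def using k by simp
    also have "\<tau>0\<^sup>2 * (\<eta>\<^sup>2 / (\<tau>0\<^sup>2 + 1)) \<le> \<eta>\<^sup>2" using tp by (simp add: field_simps)
    finally have m1: "\<kappa> * \<tau>0\<^sup>2 * (b powr (2*q) - \<phi>m powr (2*q)) \<le> \<eta>\<^sup>2" .
    have m2: "\<kappa> * \<tau>0\<^sup>2 * \<phi>m powr (2*q) \<le> \<kappa> * \<tau>0\<^sup>2 * A\<^sup>2" using A2 k by (intro mult_left_mono) auto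
    have "C0 - 2 * \<kappa> * \<alpha> * A * \<tau>0 = (- 2 * \<eta>\<^sup>2 - \<kappa> * \<tau>0\<^sup>2 * A\<^sup>2 + \<kappa> * \<tau>0\<^sup>2 * b powr (2*q)) / Pm"
      unfolding C0_def \<alpha>_def bb[symmetric] using Pm by (simp add: field_simps power2_eq_square)
    also have "\<dots> \<le> - \<eta>\<^sup>2 / Pm" using m1 m2 Pm by (intro divide_right_mono) (auto simp: algebra_simps)
    finally show ?thesis .
  qed
  have v2: "v integrable_on {a..b'}" if "-pi \<le> a" "b' \<le> pi" for a b'
  proof (cases "a \<le> b'")
    case True
    then have "{a..b'} \<subseteq> {-pi..pi}" using that by auto
    then show ?thesis using absolutely_integrable_on_subinterval[OF vai] absolutely_integrable_on_def by blast
  qed auto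
  have \<phi>'b: "\<phi>' s \<le> - c * (s - x0)" if s: "s \<in> {x0..x0+\<delta>}" for s
  proof (cases "s = x0")
    case True then show ?thesis using d0 by simp
  next
    case False
    then have xs: "x0 < s" using s by auto
    have sp: "s \<le> pi" using s \<delta> D0 by auto
    have "\<phi>' s = \<phi>' x0 + integral {x0..s} \<phi>''" by (rule wd_formula[OF wd2]) (use xs in simp)
    also have "\<dots> = integral {x0..s} \<phi>''" using d0 by simp
    also have "\<dots> \<le> integral {x0..s} R"
    proof (rule integral_le_ae[OF wd_int[OF wd2] _ Z])
      show "x0 \<le> s" using xs by simp
      show "R integrable_on {x0..s}" unfolding R_def
        by (intro integrable_on_divide integrable_diff integrable_on_mult_right v2 integrable_const_ivl) (use x0r sp in auto)
      fix x assume "x \<in> {x0<..<s}" "x \<notin> Z"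
      then show "\<phi>'' x \<le> R x" using pt[of x] s by auto
    qed
    also have "integral {x0..s} R = (C0 * (s - x0) - 2 * \<kappa> * \<alpha> * (A * \<tau>0 * (s - x0))) / (2 * \<kappa> * q)"
    proof -
      have it: "integral {x0..s} (tau t) = \<tau>0 * (s - x0)"
      proof -
        have "integral {x0..s} (tau t) = integral {x0..s} (\<lambda>x. \<tau>0)"
          by (rule integral_spike[of "{x0, s}"]) (use tau0 s \<delta> in auto)
        then show ?thesis using xs by simp
      qed
      have iv: "integral {x0..s} v = A * \<tau>0 * (s - x0)" using vint[OF x0r(1) xs sp] it by simp
      have "integral {x0..s} R = integral {x0..s} (\<lambda>x. C0 - 2 * \<kappa> * \<alpha> * v x) / (2 * \<kappa> * q)"
        unfolding R_def by (rule integral_divide)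
      also have "integral {x0..s} (\<lambda>x. C0 - 2 * \<kappa> * \<alpha> * v x) = C0 * (s - x0) - 2 * \<kappa> * \<alpha> * integral {x0..s} v"
        using xs v2[of x0 s] x0r sp by (subst integral_diff) (auto simp: integral_mult_right intro!: integrable_on_mult_right)
      finally show ?thesis using iv by simp
    qed
    also have "\<dots> = (s - x0) * (C0 - 2 * \<kappa> * \<alpha> * A * \<tau>0) / (2 * \<kappa> * q)" by (simp add: algebra_simps)
    also have "\<dots> \<le> (s - x0) * (- \<eta>\<^sup>2 / Pm) / (2 * \<kappa> * q)"
      using Cb xs k q by (intro divide_right_mono mult_left_mono) auto
    also have "\<dots> = - c * (s - x0)" unfolding c_def by (simp add: field_simps)
    finally show ?thesis .
  qed
  define y where "y = x0 + \<delta>"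
  have y: "x0 < y" "y \<in> {-pi..pi}" using \<delta> D0 x0r unfolding y_def by auto
  have "\<phi> y - \<phi> x0 = integral {x0..y} \<phi>'" using integral_unique[OF ftc_C1[OF \<phi>d, of x0 y]] y by simp
  also have "\<dots> \<le> integral {x0..y} (\<lambda>s. - c * (s - x0))"
  proof (rule integral_le)
    show "\<phi>' integrable_on {x0..y}" using ftc_C1[OF \<phi>d, of x0 y] y(1) has_integral_integrable by auto
    show "(\<lambda>s. - c * (s - x0)) integrable_on {x0..y}" by (intro integrable_continuous_real continuous_intros)
    fix s assume "s \<in> {x0..y}" then show "\<phi>' s \<le> - c * (s - x0)" using \<phi>'b unfolding y_def by blast
  qed
  also have "\<dots> = - c * (y - x0)\<^sup>2 / 2"
  proof -
    have "((\<lambda>s. - c * (s - x0)) has_integral ((- c * (y - x0)\<^sup>2 / 2) - (- c * (x0 - x0)\<^sup>2 / 2))) {x0..y}"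
    proof (rule ftc_C1)
      fix x show "((\<lambda>s. - c * (s - x0)\<^sup>2 / 2) has_real_derivative - c * (x - x0)) (at x)"
        by (rule derivative_eq_intros refl | simp add: field_simps)+
    qed (use y(1) in auto)
    then show ?thesis by (rule integral_unique[THEN trans]) simp
  qed
  also have "\<dots> < 0" using cpos y by simp
  finally have "\<phi> y < \<phi> x0" by simp
  then show False using min[OF y(2)] by simp
qed



lemma kap_pos: "n \<ge> 3 \<Longrightarrow> kap n > 0" unfolding kap_def by simp

lemma Lp_absint:
  fixes f :: "real \<Rightarrow> real"
  assumes "Lp_S1 p f" "p \<ge> 1"
  shows "f absolutely_integrable_on {-pi..pi}"
proof -
  have fm: "f measurable_on {-pi..pi}" and fp: "(\<lambda>x. \<bar>f x\<bar> powr p) integrable_on {-pi..pi}"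
    using assms(1) unfolding Lp_S1_def by auto
  have b: "f \<in> borel_measurable (lebesgue_on {-pi..pi})"
    using measurable_on_iff_borel_measurable[of "{-pi..pi}" f] fm by simp
  show ?thesis
  proof (rule measurable_bounded_by_integrable_imp_absolutely_integrable[OF b])
    show "(\<lambda>x. 1 + \<bar>f x\<bar> powr p) integrable_on {-pi..pi}" by (intro integrable_add integrable_const_ivl fp)
    fix x assume "x \<in> {-pi..pi}"
    show "norm (f x) \<le> 1 + \<bar>f x\<bar> powr p"
    proof (cases "\<bar>f x\<bar> \<le> 1")
      case True then show ?thesis using powr_ge_zero[of "\<bar>f x\<bar>" p] by (simp only: real_norm_def)
    next
      case False
      then have "\<bar>f x\<bar> powr 1 \<le> \<bar>f x\<bar> powr p" using assms(2) by (intro powr_mono) auto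
      then show ?thesis using False by simp
    qed
  qed simp
qed

lemma nonexistence:
  fixes n :: nat and N :: "real \<Rightarrow> real" and \<eta> t :: real and \<phi> w :: "real \<Rightarrow> real"
  assumes n: "n \<ge> 3" and sm: "smooth_fun N" and perN: "per2pi N" and pos: "\<forall>x. N x > 0"
    and t: "t = gammaN N" and eta: "\<eta> \<noteq> 0"
    and sol: "is_solution n N t \<eta> 0 \<phi> w"
  shows False
proof -
  define q where "q = qexp n"
  define \<kappa> where "\<kappa> = kap n"
  have q: "q > 2" unfolding q_def using q_pos[OF n] .
  have k: "\<kappa> > 0" unfolding \<kappa>_def using kap_pos[OF n] .
  obtain p \<phi>' \<phi>'' w' where p: "p > 1" and W2: "W2p_pos_S1 p \<phi> \<phi>' \<phi>''" and W1: "W1p_S1 p w w'"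
    and AEq: "AE x in lborel. - 2 * kap n * qexp n * \<phi>'' x
          - 2 * \<eta>\<^sup>2 * \<phi> x powr (- qexp n - 1)
          - kap n * (0 + w' x / (2 * N x))\<^sup>2 * \<phi> x powr (- qexp n - 1)
          + kap n * (tau t x)\<^sup>2 * \<phi> x powr (qexp n - 1) = 0"
    and tst: "\<And>\<psi>. smooth_fun \<psi> \<Longrightarrow> per2pi \<psi> \<Longrightarrow>
          - integral {-pi..pi} (\<lambda>x. w' x / (2 * N x) * deriv \<psi> x)
            = 2 * (\<phi> 0 powr qexp n * \<psi> 0 - \<phi> pi powr qexp n * \<psi> pi)"
    using sol unfolding is_solution_def by blast
  have \<phi>pos: "\<And>x. \<phi> x > 0" and per\<phi>: "per2pi \<phi>" and wd1: "is_weak_deriv \<phi> \<phi>'" and wd2: "is_weak_deriv \<phi>' \<phi>''"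
    using W2 unfolding W2p_pos_S1_def W1p_S1_def by auto
  have perw: "per2pi w" and Lw': "Lp_S1 p w'" and wdw: "is_weak_deriv w w'"
    using W1 unfolding W1p_S1_def by auto
  have \<phi>'c: "\<And>x. isCont \<phi>' x" by (rule wd_cont[OF wd2])
  have \<phi>d: "\<And>x. (\<phi> has_real_derivative \<phi>' x) (at x)" by (rule wd_deriv[OF wd1 \<phi>'c])
  have Npos: "\<And>x. N x > 0" using pos by blast
  have Nne': "\<And>x. N x \<noteq> 0" using pos by (metis less_irrefl)
  have w'ai: "w' absolutely_integrable_on {-pi..pi}" using Lp_absint[OF Lw'] p by simp
  define v where "v x = w' x / (2 * N x)" for x
  have Nc: "continuous_on S N" for S by (rule N_cont[OF sm])
  have vai: "v absolutely_integrable_on {-pi..pi}"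
  proof -
    have Nne: "\<And>x. N x \<noteq> 0" using pos by (metis less_irrefl)
    have "continuous_on {-pi..pi} (\<lambda>x. 1 / (2 * N x))" by (intro continuous_intros Nc) (simp add: Nne)
    from cont_mult_ai[OF this w'ai] show ?thesis unfolding v_def by simp
  qed
  have vi: "v integrable_on {-pi..pi}" using vai absolutely_integrable_on_def by blast
  have Nv: "((\<lambda>x. N x * v x) has_integral 0) {-pi..pi}"
  proof -
    have "(w' has_integral 0) {-pi..pi}" using wd_hasint[OF wdw, of "-pi" pi] per_pi[OF perw] by simp
    then have "((\<lambda>x. (1/2) * w' x) has_integral (1/2) * 0) {-pi..pi}" by (rule has_integral_mult_right)
    moreover have "(\<lambda>x. N x * v x) = (\<lambda>x. (1/2) * w' x)" unfolding v_def using Nne' by (simp add: field_simps)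
    ultimately show ?thesis by simp
  qed
  define A where "A = \<phi> 0 powr q"
  define B where "B = \<phi> pi powr q"
  have tstT: "- integral {-pi..pi} (\<lambda>x. v x * deriv \<psi> x) = 2 * (A * \<psi> 0 - B * \<psi> pi)" if "\<psi> \<in> trig" for \<psi>
    using tst[OF trig_smooth[OF that] trig_per[OF that]] unfolding v_def A_def B_def q_def .
  have AB: "A = B"
  proof -
    have "(\<lambda>x::real. 1::real) \<in> trig" by (rule trig_const)
    moreover have "deriv (\<lambda>x::real. 1::real) = (\<lambda>x. 0)" by (intro ext DERIV_imp_deriv) simp
    ultimately show ?thesis using tstT[of "\<lambda>x. 1"] by simp
  qed
  define g where "g x = v x - A * tau t x" for x
  have taum: "tau t \<in> borel_measurable borel" by (rule tau_meas)
  have taui: "tau t integrable_on {a..b}" for a b by (rule bdd_int[OF taum tau_bound])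
  have test0: "integral {-pi..pi} (\<lambda>x. g x * deriv \<psi> x) = 0" if \<psi>: "\<psi> \<in> trig" for \<psi>
  proof -
    have dt: "deriv \<psi> \<in> trig" "\<And>x. (\<psi> has_real_derivative deriv \<psi> x) (at x)" using trig_deriv_in[OF \<psi>] by auto
    have ti: "((\<lambda>x. tau t x * deriv \<psi> x) has_integral (2 * (\<psi> pi - \<psi> 0))) {-pi..pi}"
      by (rule tau_test[OF dt(2) trig_cont[OF dt(1)] per_pi[OF trig_per[OF \<psi>]]])
    have vi: "(\<lambda>x. v x * deriv \<psi> x) integrable_on {-pi..pi}" by (rule cont_mult_int[OF trig_cont[OF dt(1)] vai])
    have "integral {-pi..pi} (\<lambda>x. g x * deriv \<psi> x)
        = integral {-pi..pi} (\<lambda>x. v x * deriv \<psi> x - A * (tau t x * deriv \<psi> x))"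
      unfolding g_def by (simp add: algebra_simps)
    also have "\<dots> = integral {-pi..pi} (\<lambda>x. v x * deriv \<psi> x) - A * (2 * (\<psi> pi - \<psi> 0))"
      using integral_diff[OF vi has_integral_integrable[OF has_integral_mult_right[OF ti, of A]]]
        integral_unique[OF has_integral_mult_right[OF ti, of A]] by simp
    also have "\<dots> = 0" using tstT[OF \<psi>] AB by (simp add: algebra_simps)
    finally show ?thesis .
  qed
  have gi: "g integrable_on {-pi..pi}" unfolding g_def by (intro integrable_diff vi integrable_on_mult_right taui)
  have gai: "g absolutely_integrable_on {-pi..pi}"
  proof (rule absolutely_integrable_integrable_bound[OF _ gi])
    show "(\<lambda>x. \<bar>v x\<bar> + \<bar>A\<bar> * (\<bar>t\<bar> + 1)) integrable_on {-pi..pi}"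
      using vai unfolding absolutely_integrable_on_def by (intro integrable_add integrable_const_ivl) (auto simp: real_norm_def)
    fix x assume "x \<in> {-pi..pi}"
    have "\<bar>A * tau t x\<bar> \<le> \<bar>A\<bar> * (\<bar>t\<bar> + 1)" by (simp add: abs_mult mult_left_mono tau_bound)
    then show "norm (g x) \<le> \<bar>v x\<bar> + \<bar>A\<bar> * (\<bar>t\<bar> + 1)" unfolding g_def by simp
  qed
  have Nper: "N (-pi) = N pi" using per_pi[OF perN] by simp
  have IN: "integral {-pi..pi} N > 0" by (rule N_int_pos[OF sm pos])
  have gN: "integral {-pi..pi} (\<lambda>x. g x * N x) = 0"
  proof -
    have "((\<lambda>x. N x * v x - A * (N x * tau t x)) has_integral (0 - A * 0)) {-pi..pi}"
      by (intro has_integral_diff Nv has_integral_mult_right NT_zero[OF sm pos t])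
    then show ?thesis unfolding g_def by (simp add: algebra_simps integral_unique)
  qed
  have g0: "integral {-pi..pi} g = 0"
    using dubois[OF gai test0 Nc Nper] gN IN by simp
  have orth: "integral {-pi..pi} (\<lambda>x. g x * h x) = 0" if "continuous_on {-pi..pi} h" "h (-pi) = h pi" for h
    using dubois[OF gai test0 that] g0 by simp
  have vint: "integral {s..r} v = A * integral {s..r} (tau t)" if sr: "-pi \<le> s" "s < r" "r \<le> pi" for s r
  proof -
    have z: "integral {s..r} g = 0" by (rule interval_zero[OF gai orth sr])
    have sub: "{s..r} \<subseteq> {-pi..pi}" using sr by auto
    have "integral {s..r} g = integral {s..r} v - A * integral {s..r} (tau t)"
      unfolding g_def using integrable_on_subinterval[OF vi sub]
      by (subst integral_diff) (auto intro!: integrable_on_mult_right taui simp: integral_mult_right)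
    then show ?thesis using z by simp
  qed
  have "AE x in lebesgue. - 2 * kap n * qexp n * \<phi>'' x
          - 2 * \<eta>\<^sup>2 * \<phi> x powr (- qexp n - 1)
          - kap n * (0 + w' x / (2 * N x))\<^sup>2 * \<phi> x powr (- qexp n - 1)
          + kap n * (tau t x)\<^sup>2 * \<phi> x powr (qexp n - 1) = 0"
    by (rule AE_completion[OF AEq])
  then obtain Z where Z: "negligible Z" and ZZ: "\<And>x. x \<notin> Z \<Longrightarrow> - 2 * kap n * qexp n * \<phi>'' x
          - 2 * \<eta>\<^sup>2 * \<phi> x powr (- qexp n - 1)
          - kap n * (0 + w' x / (2 * N x))\<^sup>2 * \<phi> x powr (- qexp n - 1)
          + kap n * (tau t x)\<^sup>2 * \<phi> x powr (qexp n - 1) = 0"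
    unfolding eventually_ae_filter_negligible by blast
  show False
  proof (rule local_contra[OF q k eta \<phi>pos per\<phi> \<phi>d wd2 vai vint _ Z])
    show "A = \<phi> 0 powr q" unfolding A_def ..
    fix x assume "x \<notin> Z"
    from ZZ[OF this] show "- 2 * \<kappa> * q * \<phi>'' x - 2 * \<eta>\<^sup>2 * \<phi> x powr (- q - 1)
              - \<kappa> * (0 + v x)\<^sup>2 * \<phi> x powr (- q - 1) + \<kappa> * (tau t x)\<^sup>2 * \<phi> x powr (q - 1) = 0"
      unfolding v_def q_def \<kappa>_def .
  qed
qed

theorem theorem3p2:
  fixes n :: nat and N :: "real \<Rightarrow> real" and \<eta> \<mu> t :: real
  assumes "n \<ge> 3"
    and "smooth_fun N" and "per2pi N" and "\<forall>x. N x > 0"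
    and "t = gammaN N"
  shows "(\<mu> = 0 \<and> \<eta> = 0 \<longrightarrow>
           (\<exists>(a::real) b F. a < b \<and>
              (\<forall>s\<in>{a<..<b}. is_solution n N t \<eta> \<mu> (fst (F s)) (snd (F s))) \<and>
              (\<forall>s1\<in>{a<..<b}. \<forall>s2\<in>{a<..<b}. s1 \<noteq> s2 \<longrightarrow> \<not> same_solution (F s1) (F s2))))
       \<and> (\<mu> = 0 \<and> \<eta> \<noteq> 0 \<longrightarrow> \<not> (\<exists>\<phi> w. is_solution n N t \<eta> \<mu> \<phi> w))"
  using existence[OF assms] nonexistence[OF assms] by blast


end
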